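(* For all $a\in\mathbb F$, $i\in\mathbb Z$, $k\in K$, the following hold (in $(\mathcal U(\mathcal L)\otimes\mathcal U(\mathcal L))[[t]]$ for (1)–(4), in $\mathcal U(\mathcal L)[[t]]$ for (5)–(6)): (1) $(L_i\otimes1)F_a=\sum_{s=0}^{\infty}\alpha^s\left[\begin{matrix}(s-2)m-i\\ s\end{matrix}\right]_m F_{a-\frac im+s}\,(L_{i-sm}\otimes Y^st^s)$; (2) $(G_k\otimes1)F_a=\sum_{s=0}^{\infty}\alpha^s\left[\begin{matrix}(s-\frac32)m-k\\ s\end{matrix}\right]_m F_{a-\frac km+s}\,(G_{k-sm}\otimes Y^st^s)$; (3) $(1\otimes L_i)F_a=\sum_{s=0}^{\infty}(-1)^sF_{a+s}\Big(\sum_{p=0}^{2s}\alpha^pa_p(s,i)\,X_a^{<s>}\otimes L_{i+(s-p)m}t^s\Big)$; (4) $(1\otimes G_k)F_a=\sum_{s=0}^{\infty}(-1)^sF_{a+s}\Big(\sum_{p=0}^{2s}\alpha^pb_p(s,k)\,X_a^{<s>}\otimes G_{k+(s-p)m}t^s\Big)$; (5) $L_iu_a=u_{a+\frac im}\sum_{s=0}^{\infty}\sum_{p=0}^{\infty}\sum_{q=0}^{2p}(-1)^s\alpha^{s+q}\left[\begin{matrix}(s-2)m-i\\ s\end{matrix}\right]_m a_q(p,i-sm)\,X_{-a-\frac im}^{[p]}L_{i+(p-s-q)m}Y^st^{s+p}$; (6) $G_ku_a=u_{a+\frac km}\sum_{s=0}^{\infty}\sum_{p=0}^{\infty}\sum_{q=0}^{2p}(-1)^s\alpha^{s+q}\left[\begin{matrix}(s-\frac32)m-k\\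 s\end{matrix}\right]_m b_q(p,k-sm)\,X_{-a-\frac km}^{[p]}G_{k+(p-s-q)m}Y^st^{s+p}$.
   Context: Let $\mathbb F$ be a field of characteristic zero. Fix $\varepsilon\in\{0,\tfrac12\}$ and set $K=\varepsilon+\mathbb Z$. The super-Virasoro algebra (without central extension) $\mathcal L$ is the Lie superalgebra over $\mathbb F$ with even basis $\{L_i\}_{i\in\mathbb Z}$, odd basis $\{G_k\}_{k\in K}$, and brackets $[L_i,L_j]=(j-i)L_{i+j}$, $[L_i,G_k]=(k-\frac i2)G_{i+k}$, $[G_k,G_l]=2L_{k+l}$. $\mathcal U(\mathcal L)$ is its universal enveloping superalgebra, $\mathcal U(\mathcal L)[[t]]$ the formal power series in $t$ over it; tensor products of superalgebras use the sign rule $(a\otimes b)(c\otimes d)=(-1)^{[b][c]}ac\otimes bd$. Fix a nonzero integer $m$ and $\alpha\in\mathbb F$. Put $X=\frac1m(L_0+\alpha mL_{-m})$ and $Y=\exp(\alpha\,\mathrm{ad}\,L_{-m})(L_m)=L_m+2\alpha mL_0+\alpha^2m^2L_{-m}$ (both even). For an element $x$ of an algebra, $a\in\mathbb F$, $r\in\mathbb Z_{\ge0}$: $x_a^{<r>}=(x+a)(x+a+1)\cdots(x+a+r-1)$, $x_a^{[r]}=(x+a)(x+a-1)\cdots(x+a-r+1)$ (both $=1$ for $r=0$). For $a,c\in\mathbb F$, $r\in\mathbb Z_{\ge0}$: $\left[\begin{matrix}a\\ r\end{matrix}\right]_c=\frac{a(a-c)\cdots(a-(r-1)c)}{r!}$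 ($=1$ if $r=0$). For $r,s\in\mathbb Z_{\ge0}$, $i\in\mathbb Z$, $k\in\frac12\mathbb Z$: $a_s(r,i)=\sum_{p=0}^{s}(-1)^p\left[\begin{matrix}i+m\\ p\end{matrix}\right]_m\left[\begin{matrix}i+(r-p-2)m\\ r\end{matrix}\right]_m\left[\begin{matrix}i+(r-p+1)m\\ s-p\end{matrix}\right]_m$, $b_s(r,k)=\sum_{p=0}^{s}(-1)^p\left[\begin{matrix}k+\frac m2\\ p\end{matrix}\right]_m\left[\begin{matrix}k+(r-p-\frac32)m\\ r\end{matrix}\right]_m\left[\begin{matrix}k+(r-p+\frac12)m\\ s-p\end{matrix}\right]_m$. For $a\in\mathbb F$ define $F_a=\sum_{r\ge0}\frac1{r!}X_a^{<r>}\otimes Y^rt^r$ and $u_a=\sum_{r\ge0}\frac{(-1)^r}{r!}X_{-a}^{[r]}Y^rt^r$. *)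

theory Defs
  imports "HOL-Computational_Algebra.Formal_Power_Series"
begin

definition lprod :: "'b::ring_1 list \<Rightarrow> 'b" where
  "lprod xs = foldr (*) xs 1"

(* x^{<r>} with x already shifted: (y)(y+1)...(y+r-1) *)
definition rise :: "'b::ring_1 \<Rightarrow> nat \<Rightarrow> 'b" where
  "rise y r = lprod (map (\<lambda>j. y + of_nat j) [0..<r])"

(* x^{[r]} with x already shifted: (y)(y-1)...(y-r+1) *)
definition fall :: "'b::ring_1 \<Rightarrow> nat \<Rightarrow> 'b" where
  "fall y r = lprod (map (\<lambda>j. y - of_nat j) [0..<r])"

definition gbin :: "'f::field_char_0 \<Rightarrow> 'f \<Rightarrow> nat \<Rightarrow> 'f" where
  "gbin c a r = (\<Prod>j<r. (a - of_nat j * c)) / fact r"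

definition acoef :: "int \<Rightarrow> nat \<Rightarrow> int \<Rightarrow> nat \<Rightarrow> 'f::field_char_0" where
  "acoef m r i s = (\<Sum>p\<le>s. (-1) ^ p
      * gbin (of_int m) (of_int i + of_int m) p
      * gbin (of_int m) (of_int i + (of_nat r - of_nat p - 2) * of_int m) r
      * gbin (of_int m) (of_int i + (of_nat r - of_nat p + 1) * of_int m) (s - p))"

(* b_s(r,k), k given as a field element *)
definition bcoef :: "int \<Rightarrow> nat \<Rightarrow> 'f \<Rightarrow> nat \<Rightarrow> 'f::field_char_0" where
  "bcoef m r k s = (\<Sum>p\<le>s. (-1) ^ p
      * gbin (of_int m) (k + of_int m / 2) p
      * gbin (of_int m) (k + (of_nat r - of_nat p - 3 / 2) * of_int m) r
      * gbin (of_int m) (k + (of_nat r - of_nat p + 1 / 2) * of_int m) (s - p))"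

(* t-adically convergent infinite sum of formal power series: the n-th coefficient
   is the (finite) sum of the n-th coefficients of the summands. *)
definition fps_tsum :: "(nat \<Rightarrow> 'b::comm_monoid_add fps) \<Rightarrow> 'b fps" where
  "fps_tsum f = Abs_fps (\<lambda>n. \<Sum>s\<in>{s. fps_nth (f s) n \<noteq> 0}. fps_nth (f s) n)"

(* emb : F -> A is a central unital ring homomorphism, i.e. A is a unital associative F-algebra *)
definition central_emb :: "('f::field_char_0 \<Rightarrow> 'b::ring_1) \<Rightarrow> bool" where
  "central_emb emb \<longleftrightarrow> emb 1 = 1 \<and> (\<forall>x y. emb (x + y) = emb x + emb y)
     \<and> (\<forall>x y. emb (x * y) = emb x * emb y) \<and> (\<forall>x b. emb x * b = b * emb x)"

(* L : Z -> A, G : Z -> A (G j stands for G_{j+eps}, eps = eps2/2) satisfy the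
   super-Virasoro relations (i.e. they define an algebra homomorphism U(L) -> A) *)
definition svir_rel :: "('f::field_char_0 \<Rightarrow> 'b::ring_1) \<Rightarrow> int \<Rightarrow> (int \<Rightarrow> 'b) \<Rightarrow> (int \<Rightarrow> 'b) \<Rightarrow> bool" where
  "svir_rel emb eps2 L G \<longleftrightarrow>
     (\<forall>i j. L i * L j - L j * L i = emb (of_int j - of_int i) * L (i + j))
   \<and> (\<forall>i j. L i * G j - G j * L i = emb (of_int j + of_int eps2 / 2 - of_int i / 2) * G (i + j))
   \<and> (\<forall>j l. G j * G l + G l * G j = emb 2 * L (j + l + eps2))"

(* two copies super-commute (copy 1 = x \<otimes> 1, copy 2 = 1 \<otimes> y) *)
definition svir_supercomm :: "(int \<Rightarrow> 'b::ring_1) \<Rightarrow> (int \<Rightarrow> 'b) \<Rightarrow> (int \<Rightarrow> 'b) \<Rightarrow> (int \<Rightarrow> 'b) \<Rightarrow> bool" where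
  "svir_supercomm L1 G1 L2 G2 \<longleftrightarrow>
     (\<forall>i j. L1 i * L2 j = L2 j * L1 i) \<and> (\<forall>i j. L1 i * G2 j = G2 j * L1 i)
   \<and> (\<forall>i j. G1 i * L2 j = L2 j * G1 i) \<and> (\<forall>i j. G1 i * G2 j = - (G2 j * G1 i))"

definition Xel :: "('f::field_char_0 \<Rightarrow> 'b::ring_1) \<Rightarrow> int \<Rightarrow> 'f \<Rightarrow> (int \<Rightarrow> 'b) \<Rightarrow> 'b" where
  "Xel emb m \<alpha> L = emb (1 / of_int m) * (L 0 + emb (\<alpha> * of_int m) * L (- m))"

definition Yel :: "('f::field_char_0 \<Rightarrow> 'b::ring_1) \<Rightarrow> int \<Rightarrow> 'f \<Rightarrow> (int \<Rightarrow> 'b) \<Rightarrow> 'b" where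
  "Yel emb m \<alpha> L = L m + emb (2 * \<alpha> * of_int m) * L 0 + emb (\<alpha>^2 * of_int m ^ 2) * L (- m)"

(* F_a = sum_r 1/r! X_a^{<r>} \<otimes> Y^r t^r, with X \<otimes> 1 from copy 1, 1 \<otimes> Y from copy 2 *)
definition Fser :: "('f::field_char_0 \<Rightarrow> 'b::ring_1) \<Rightarrow> int \<Rightarrow> 'f \<Rightarrow> (int \<Rightarrow> 'b) \<Rightarrow> (int \<Rightarrow> 'b) \<Rightarrow> 'f \<Rightarrow> 'b fps" where
  "Fser emb m \<alpha> L1 L2 a = fps_tsum (\<lambda>r.
      fps_const (emb (1 / fact r) * rise (Xel emb m \<alpha> L1 + emb a) r * Yel emb m \<alpha> L2 ^ r) * fps_X ^ r)"

definition user :: "('f::field_char_0 \<Rightarrow> 'b::ring_1) \<Rightarrow> int \<Rightarrow> 'f \<Rightarrow> (int \<Rightarrow> 'b) \<Rightarrow> 'f \<Rightarrow> 'b fps" where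
  "user emb m \<alpha> L a = fps_tsum (\<lambda>r.
      fps_const (emb ((-1) ^ r / fact r) * fall (Xel emb m \<alpha> L + emb (- a)) r * Yel emb m \<alpha> L ^ r) * fps_X ^ r)"

end

theory Submission
  imports Defs
begin

locale cemb =
  fixes emb :: "'f::field_char_0 \<Rightarrow> 'b::ring_1"
  assumes ce: "central_emb emb"
begin

lemma emb_one[simp]: "emb 1 = 1" using ce unfolding central_emb_def by blast
lemma emb_add[simp]: "emb (x + y) = emb x + emb y" using ce unfolding central_emb_def by blast
lemma emb_mult: "emb (x * y) = emb x * emb y" using ce unfolding central_emb_def by blast
lemma emb_comm: "emb x * b = b * emb x" using ce unfolding central_emb_def by blast
lemma emb_zero[simp]: "emb 0 = 0"
  using emb_add[of 0 0] by simp
lemma emb_uminus[simp]: "emb (- x) = - emb x"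
  using emb_add[of x "-x"] by (metis add.right_inverse emb_zero minus_unique)
lemma emb_diff[simp]: "emb (x - y) = emb x - emb y"
  using emb_add[of x "-y"] by simp
lemma emb_of_nat[simp]: "emb (of_nat n) = of_nat n"
  by (induct n) auto
lemma emb_of_int[simp]: "emb (of_int n) = of_int n"
  by (cases n rule: int_cases) (auto simp del: of_nat_Suc)
lemma emb_numeral[simp]: "emb (numeral n) = numeral n"
  using emb_of_nat[of "numeral n"] by simp
lemma emb_sum: "emb (sum f A) = (\<Sum>x\<in>A. emb (f x))"
  by (induct A rule: infinite_finite_induct) auto
lemma emb_power: "emb (x ^ n) = emb x ^ n"
  by (induct n) (auto simp: emb_mult)

lemma emb_left_comm: "b * (emb x * c) = emb x * (b * c)"
  by (metis emb_comm mult.assoc)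
lemma emb_emb: "emb x * (emb y * c) = emb (x * y) * c"
  by (simp add: emb_mult mult.assoc)
lemma emb_emb2: "emb x * emb y = emb (x * y)"
  by (simp add: emb_mult)

definition sc :: "'f \<Rightarrow> 'b \<Rightarrow> 'b" where "sc c b = emb c * b"

lemma emb_sc: "emb c = sc c 1" by (simp add: sc_def)
lemma sc_mult_left: "b * sc c d = sc c (b * d)" by (simp add: sc_def emb_left_comm)
lemma sc_mult_right: "sc c b * d = sc c (b * d)" by (simp add: sc_def mult.assoc)
lemma sc_sc: "sc c (sc d b) = sc (c * d) b" by (simp add: sc_def emb_emb)
lemma sc_add: "sc c (a + b) = sc c a + sc c b" by (simp add: sc_def distrib_left)
lemma sc_diff: "sc c (a - b) = sc c a - sc c b" by (simp add: sc_def right_diff_distrib)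
lemma sc_minus: "sc c (- a) = sc (-c) a" by (simp add: sc_def)
lemma sc_uminus: "sc (- c) a = - sc c a" by (simp add: sc_def)
lemma sc_addc: "sc c a + sc d a = sc (c + d) a" by (simp add: sc_def distrib_right)
lemma sc_0[simp]: "sc 0 a = 0" by (simp add: sc_def)
lemma sc_1[simp]: "sc 1 a = a" by (simp add: sc_def)
lemma sc_zero[simp]: "sc c 0 = 0" by (simp add: sc_def)
lemma sc_sum: "sc c (sum f A) = (\<Sum>x\<in>A. sc c (f x))" by (simp add: sc_def sum_distrib_left)
lemma sc_cong: "c = d \<Longrightarrow> sc c a = sc d a" by simp

lemma emb_mult_sc: "emb c * b = sc c b" by (simp add: sc_def)
lemma mult_emb_sc: "b * emb c = sc c b" by (simp add: sc_def emb_comm)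
lemma emb_sc1: "emb c = sc c 1" by (simp add: sc_def)

lemmas scn = emb_mult_sc mult_emb_sc sc_mult_left sc_mult_right sc_sc mult_1_left mult_1_right

end


lemma lprod_append: "lprod (xs @ ys) = lprod xs * lprod ys"
  unfolding lprod_def by (induct xs) (auto simp: mult.assoc)

lemma rise_0[simp]: "rise y 0 = 1" and fall_0[simp]: "fall y 0 = 1"
  by (auto simp: rise_def fall_def lprod_def)

lemma rise_Suc: "rise y (Suc n) = rise y n * (y + of_nat n)"
  unfolding rise_def by (simp add: lprod_append) (simp add: lprod_def)

lemma fall_Suc: "fall y (Suc n) = fall y n * (y - of_nat n)"
  unfolding fall_def by (simp add: lprod_append) (simp add: lprod_def)

lemma rise_Suc': "rise y (Suc n) = y * rise (y + 1) n"
proof -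
  have "[0..<Suc n] = 0 # map Suc [0..<n]" by (simp add: map_Suc_upt upt_conv_Cons)
  then show ?thesis unfolding rise_def by (simp add: lprod_def o_def add.assoc)
qed

lemma fall_Suc': "fall y (Suc n) = y * fall (y - 1) n"
proof -
  have "[0..<Suc n] = 0 # map Suc [0..<n]" by (simp add: map_Suc_upt upt_conv_Cons)
  then show ?thesis unfolding fall_def by (simp add: lprod_def o_def diff_diff_eq)
qed

lemma of_nat_comm: "of_nat n * (w::'a::ring_1) = w * of_nat n"
  by (rule mult_of_nat_commute)

lemma rise_comm: "w * y = y * w \<Longrightarrow> w * rise y n = rise y n * w"
proof (induct n)
  case (Suc n)
  have "w * rise y (Suc n) = (w * rise y n) * (y + of_nat n)" by (simp add: rise_Suc mult.assoc)
  also have "\<dots> = rise y n * (w * (y + of_nat n))" using Suc by (simp add: mult.assoc)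
  also have "w * (y + of_nat n) = (y + of_nat n) * w" using Suc(2)
    by (simp add: distrib_left distrib_right of_nat_comm)
  finally show ?case by (simp add: rise_Suc mult.assoc)
qed simp

lemma fall_comm: "w * y = y * w \<Longrightarrow> w * fall y n = fall y n * w"
proof (induct n)
  case (Suc n)
  have "w * fall y (Suc n) = (w * fall y n) * (y - of_nat n)" by (simp add: fall_Suc mult.assoc)
  also have "\<dots> = fall y n * (w * (y - of_nat n))" using Suc by (simp add: mult.assoc)
  also have "w * (y - of_nat n) = (y - of_nat n) * w" using Suc(2)
    by (simp add: right_diff_distrib left_diff_distrib of_nat_comm)
  finally show ?case by (simp add: fall_Suc mult.assoc)
qed simp

context cemb begin

definition XE :: "'b \<Rightarrow> 'f \<Rightarrow> 'b" where "XE X c = X + emb c"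

lemma XE_comm: "XE X c * XE X d = XE X d * XE X c"
  unfolding XE_def
  by (simp add: distrib_left distrib_right emb_comm[of c X] emb_comm[of d X] emb_comm[of c "emb d"] add_ac)

lemma rise_rise_comm: "rise (XE X c) n * rise (XE X d) k = rise (XE X d) k * rise (XE X c) n"
proof -
  have "\<And>c. XE X c * rise (XE X d) k = rise (XE X d) k * XE X c"
    by (rule rise_comm) (rule XE_comm)
  then show ?thesis by (intro rise_comm[of "rise (XE X d) k" "XE X c", symmetric]) simp
qed

lemma fall_fall_comm: "fall (XE X c) n * fall (XE X d) k = fall (XE X d) k * fall (XE X c) n"
proof -
  have "\<And>c. XE X c * fall (XE X d) k = fall (XE X d) k * XE X c"
    by (rule fall_comm) (rule XE_comm)
  then show ?thesis by (intro fall_comm[of "fall (XE X d) k" "XE X c", symmetric]) simp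
qed

lemma XE_rise_comm: "XE X c * rise (XE X d) k = rise (XE X d) k * XE X c"
  by (rule rise_comm) (rule XE_comm)
lemma XE_fall_comm: "XE X c * fall (XE X d) k = fall (XE X d) k * XE X c"
  by (rule fall_comm) (rule XE_comm)

lemma rise_XE: "rise (XE X c) (Suc n) = rise (XE X c) n * XE X (c + of_nat n)"
  unfolding XE_def by (simp only: rise_Suc emb_add emb_of_nat add.assoc)
lemma rise_XE': "rise (XE X c) (Suc n) = XE X c * rise (XE X (c + 1)) n"
  unfolding XE_def by (simp only: rise_Suc' emb_add emb_one add.assoc)
lemma fall_XE: "fall (XE X c) (Suc n) = fall (XE X c) n * XE X (c - of_nat n)"
  unfolding XE_def by (simp only: fall_Suc emb_diff emb_of_nat add_diff_eq)
lemma fall_XE': "fall (XE X c) (Suc n) = XE X c * fall (XE X (c - 1)) n"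
  unfolding XE_def by (simp only: fall_Suc' emb_diff emb_one add_diff_eq)

lemma sc4: "sc a X + sc b Y + sc c X + sc d Y = sc (a + c) X + sc (b + d) Y"
  by (simp add: sc_def distrib_right add_ac emb_add)

lemma sc_XE: "sc p (XE X q) = sc p X + sc (p * q) 1"
  by (simp add: XE_def sc_def distrib_left emb_mult)

end

lemma gbin_0[simp]: "gbin c a 0 = 1" by (simp add: gbin_def)

lemma gbin_Suc: "gbin c a (Suc r) = gbin c a r * (a - of_nat r * c) / of_nat (Suc r)"
  by (simp add: gbin_def field_simps)

lemma gbin_Suc': "gbin c a (Suc r) = a * gbin c (a - c) r / of_nat (Suc r)"
proof -
  have "(\<Prod>j<Suc r. a - of_nat j * c) = a * (\<Prod>j<r. (a - c) - of_nat j * c)"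
    by (subst prod.lessThan_Suc_shift) (simp add: algebra_simps)
  then show ?thesis by (simp add: gbin_def field_simps)
qed

definition kap :: "'f::field_char_0 \<Rightarrow> 'f \<Rightarrow> 'f \<Rightarrow> 'f \<Rightarrow> nat \<Rightarrow> 'f" where
  "kap \<alpha> \<gamma> mm x s = \<alpha> ^ s * gbin mm ((of_nat s - 1 - \<gamma>) * mm - x) s"

lemma kap_0[simp]: "kap \<alpha> \<gamma> mm x 0 = 1" by (simp add: kap_def)

lemma kap_Suc: "kap \<alpha> \<gamma> mm x (Suc s) * of_nat (Suc s) = kap \<alpha> \<gamma> mm x s * (\<alpha> * ((of_nat s - \<gamma>) * mm - x))"
proof -
  have "(of_nat (Suc s) - 1 - \<gamma>) * mm - x - mm = (of_nat s - 1 - \<gamma>) * mm - x"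
    by (simp add: algebra_simps)
  moreover have "(of_nat (Suc s) - 1 - \<gamma>) * mm - x = (of_nat s - \<gamma>) * mm - x" by simp
  ultimately show ?thesis unfolding kap_def
    by (simp only: gbin_Suc') (simp add: field_simps del: of_nat_Suc)
qed

lemma sum_atMost_single0: "(\<And>s. 0 < s \<Longrightarrow> f s = 0) \<Longrightarrow> (\<Sum>s\<le>M. f s) = f (0::nat)"
  by (induct M) auto

lemma scal_a: "(f::'f::field) \<noteq> 0 \<Longrightarrow> w \<noteq> 0 \<Longrightarrow> u \<noteq> 0 \<Longrightarrow>
  1 / w * (1 / f) + 1 / w * ((w - u) / (u * f)) = 1 / (u * f)"
  by (simp add: field_simps)
lemma scal_b: "(f::'f::field) \<noteq> 0 \<Longrightarrow> w \<noteq> 0 \<Longrightarrow> u \<noteq> 0 \<Longrightarrow>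
  1 / w * (1 / f) * (d + (w - 1)) + 1 / w * ((w - u) / (u * f)) * (d - 1) = 1 / (u * f) * (d + (u - 1))"
  by (simp add: field_simps)
lemma nz1: "(1 + of_nat k + of_nat t :: 'f::field_char_0) \<noteq> 0"
  using of_nat_neq_0[of "k + t"] by (simp add: add_ac)
lemma nz2: "(1 + of_nat k :: 'f::field_char_0) \<noteq> 0"
  using of_nat_neq_0[of "k"] by (simp add: add_ac)

context cemb begin

definition Rr :: "'b \<Rightarrow> 'f \<Rightarrow> nat \<Rightarrow> nat \<Rightarrow> 'b" where
  "Rr X d N s = (if s \<le> N then sc (1 / fact (N - s)) (rise (XE X d) (N - s)) else 0)"

definition Rf :: "'b \<Rightarrow> 'f \<Rightarrow> nat \<Rightarrow> nat \<Rightarrow> 'b" where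
  "Rf X d N s = (if s \<le> N then sc (1 / fact (N - s)) (fall (XE X d) (N - s)) else 0)"

lemma Q_rise: "sc (1 / of_nat (Suc N)) (Rr X d N s * XE X (d + of_nat N) + sc (of_nat s) (Rr X (d - 1) N (s - 1)))
   = Rr X d (Suc N) s"
proof (cases "s = 0")
  case True
  then show ?thesis
    by (simp add: Rr_def rise_XE scn del: of_nat_Suc fact_Suc)
       (rule sc_cong, simp add: field_simps del: of_nat_Suc)
next
  case False
  show ?thesis
  proof (cases "s \<le> N")
    case True
    define K where "K = N - s"
    have NK: "N = K + s" "Suc N - s = Suc K" "N - (s - 1) = Suc K" using True False by (auto simp: K_def)
    have r1: "rise (XE X (d - 1)) (Suc K) = rise (XE X d) K * XE X (d - 1)"
      using XE_rise_comm[of X "d - 1" d K] by (simp add: rise_XE')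
    have "sc (1 / of_nat (Suc N)) (Rr X d N s * XE X (d + of_nat N) + sc (of_nat s) (Rr X (d - 1) N (s - 1)))
      = rise (XE X d) K * (sc (1 / of_nat (Suc N)) (sc (1 / fact K) (XE X (d + of_nat N)) + sc (of_nat s / fact (Suc K)) (XE X (d - 1))))"
      using True False unfolding Rr_def NK(3) K_def[symmetric] r1
      by (simp add: scn \<open>s \<le> N\<close> le_diff_conv le_SucI sc_add distrib_left del: fact_Suc of_nat_Suc)
    also have "sc (1 / of_nat (Suc N)) (sc (1 / fact K) (XE X (d + of_nat N)) + sc (of_nat s / fact (Suc K)) (XE X (d - 1)))
       = sc (1 / fact (Suc K)) (XE X (d + of_nat K))"
    proof -
      have s_eq: "of_nat s = (of_nat (Suc N) - of_nat (Suc K) :: 'f)" using NK(1) by simp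
      have N_eq: "of_nat N = (of_nat (Suc N) - 1 :: 'f)" by simp
      have K_eq: "of_nat K = (of_nat (Suc K) - 1 :: 'f)" by simp
      have a: "1 / of_nat (Suc N) * (1 / fact K) + 1 / of_nat (Suc N) * (of_nat s / fact (Suc K)) = (1 / fact (Suc K) :: 'f)"
        unfolding fact_Suc s_eq by (rule scal_a, simp, rule of_nat_neq_0, rule of_nat_neq_0)
      have b: "1 / of_nat (Suc N) * (1 / fact K) * (d + of_nat N) + 1 / of_nat (Suc N) * (of_nat s / fact (Suc K)) * (d - 1) = (1 / fact (Suc K) * (d + of_nat K) :: 'f)"
        unfolding fact_Suc s_eq N_eq K_eq by (rule scal_b, simp, rule of_nat_neq_0, rule of_nat_neq_0)
      show ?thesis
        apply (simp only: sc_add sc_sc sc_XE add.assoc[symmetric] sc4)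
        apply (rule arg_cong2[where f="(+)"])
         apply (rule sc_cong) using a apply (simp only: distrib_left)
        apply (rule sc_cong) using b by (simp only: distrib_left mult.assoc)
    qed
    finally show ?thesis using True unfolding Rr_def NK(2) by (simp add: rise_XE sc_mult_left del: fact_Suc of_nat_Suc)
  next
    case False
    then show ?thesis using \<open>s \<noteq> 0\<close>
      by (cases "s = Suc N") (auto simp: Rr_def scn simp del: of_nat_Suc)
  qed
qed

end

context cemb begin

lemma Q_fall: "sc (1 / of_nat (Suc N)) (Rf X d N s * XE X (d + of_nat s - of_nat N) + sc (of_nat s) (Rf X d N (s - 1)))
   = Rf X d (Suc N) s"
proof (cases "s = 0")
  case True
  then show ?thesis
    by (simp add: Rf_def fall_XE scn del: of_nat_Suc fact_Suc)
       (rule sc_cong, simp add: field_simps del: of_nat_Suc)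
next
  case False
  show ?thesis
  proof (cases "s \<le> N")
    case True
    define K where "K = N - s"
    have NK: "N = K + s" "Suc N - s = Suc K" "N - (s - 1) = Suc K" using True False by (auto simp: K_def)
    have dK: "d + of_nat s - of_nat N = d - of_nat K" using NK(1) by simp
    have "sc (1 / of_nat (Suc N)) (Rf X d N s * XE X (d + of_nat s - of_nat N) + sc (of_nat s) (Rf X d N (s - 1)))
      = fall (XE X d) K * (sc (1 / of_nat (Suc N) * (1 / fact K + of_nat s / fact (Suc K))) (XE X (d - of_nat K)))"
      using True False unfolding Rf_def NK(3) K_def[symmetric] dK fall_XE
      by (simp add: scn \<open>s \<le> N\<close> le_diff_conv le_SucI sc_add distrib_left sc_addc del: fact_Suc of_nat_Suc)
    also have "1 / of_nat (Suc N) * (1 / fact K + of_nat s / fact (Suc K)) = (1 / fact (Suc K) :: 'f)"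
    proof -
      have s_eq: "of_nat s = (of_nat (Suc N) - of_nat (Suc K) :: 'f)" using NK(1) by simp
      show ?thesis unfolding fact_Suc s_eq distrib_left
        by (rule scal_a, simp, rule of_nat_neq_0, rule of_nat_neq_0)
    qed
    finally show ?thesis using True unfolding Rf_def NK(2) by (simp add: fall_XE sc_mult_left del: fact_Suc of_nat_Suc)
  next
    case False
    then show ?thesis using \<open>s \<noteq> 0\<close>
      by (cases "s = Suc N") (auto simp: Rf_def scn simp del: of_nat_Suc)
  qed
qed

lemma eXE:
  assumes eX: "e k * X = XE X (- (xk / mm)) * e k - sc b (e (k - 1))"
  shows "e k * XE X d = XE X (d - xk / mm) * e k - sc b (e (k - 1))"
proof -
  have "e k * XE X d = e k * X + e k * emb d" by (simp add: XE_def distrib_left)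
  also have "\<dots> = XE X (- (xk / mm)) * e k + emb d * e k - sc b (e (k - 1))"
    by (simp add: eX emb_comm)
  also have "XE X (- (xk / mm)) * e k + emb d * e k = XE X (d - xk / mm) * e k"
    by (simp add: XE_def distrib_right left_diff_distrib add_ac)
  finally show ?thesis .
qed

lemma Rr_big: "N < s \<Longrightarrow> Rr X d N s = 0" by (simp add: Rr_def)
lemma Rf_big: "N < s \<Longrightarrow> Rf X d N s = 0" by (simp add: Rf_def)

lemma sc_comm: "sc a (sc b z) = sc b (sc a z)" by (simp add: sc_sc mult.commute)

lemma A_rise:
  assumes mm: "mm \<noteq> 0"
    and eX: "\<And>k. e k * X = XE X (- ((x0 + of_int k * mm) / mm)) * e k - sc (\<alpha> * (x0 + of_int k * mm + \<gamma> * mm)) (e (k - 1))"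
  shows "M \<ge> N \<Longrightarrow> e n * sc (1 / fact N) (rise (XE X c) N)
    = (\<Sum>s\<le>M. sc (kap \<alpha> \<gamma> mm (x0 + of_int n * mm) s) (Rr X (c - (x0 + of_int n * mm) / mm + of_nat s) N s * e (n - int s)))"
proof (induct N arbitrary: M)
  case 0
  show ?case
    by (subst sum_atMost_single0) (auto simp: Rr_def)
next
  case (Suc N)
  define x where "x = x0 + of_int n * mm"
  define c' where "c' = c - x / mm"
  define \<kappa> where "\<kappa> = kap \<alpha> \<gamma> mm x"
  have IH: "e n * sc (1 / fact N) (rise (XE X c) N) = (\<Sum>s\<le>M. sc (\<kappa> s) (Rr X (c' + of_nat s) N s * e (n - int s)))"
    using Suc by (simp add: x_def c'_def \<kappa>_def)
  have step_e: "e (n - int s) * XE X (c + of_nat N) = XE X (c' + of_nat s + of_nat N) * e (n - int s)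
      - sc (\<alpha> * (x0 + of_int (n - int s) * mm + \<gamma> * mm)) (e (n - int s - 1))" for s
  proof -
    have "c + of_nat N - (x0 + of_int (n - int s) * mm) / mm = c' + of_nat s + of_nat N"
      using mm by (simp add: c'_def x_def field_simps)
    note eq = this
    show ?thesis apply (subst eXE[where e=e and k="n - int s" and X=X and xk="x0 + of_int (n - int s) * mm" and mm=mm
        and b="\<alpha> * (x0 + of_int (n - int s) * mm + \<gamma> * mm)" and d="c + of_nat N", OF eX]) by (simp only: eq)
  qed
  define f where "f s = sc (\<kappa> s) (Rr X (c' + of_nat s) N s * XE X (c' + of_nat s + of_nat N) * e (n - int s))" for s
  define g where "g s = sc (\<kappa> s * of_nat s) (Rr X (c' + of_nat s - 1) N (s - 1) * e (n - int s))" for s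
  have hg: "sc (\<kappa> s) (Rr X (c' + of_nat s) N s * e (n - int s) * XE X (c + of_nat N)) = f s + g (Suc s)" for s
  proof -
    have k: "\<kappa> (Suc s) * of_nat (Suc s) = - (\<kappa> s * (\<alpha> * (x0 + of_int (n - int s) * mm + \<gamma> * mm)))"
      unfolding \<kappa>_def kap_Suc by (simp add: x_def algebra_simps)
    have gS: "g (Suc s) = sc (- (\<kappa> s * (\<alpha> * (x0 + of_int (n - int s) * mm + \<gamma> * mm)))) (Rr X (c' + of_nat s) N s * e (n - int s - 1))"
      unfolding g_def k by (simp add: diff_diff_eq add.commute)
    show ?thesis
      unfolding gS f_def mult.assoc step_e
      by (simp add: right_diff_distrib sc_diff scn sc_uminus sc_sc del: of_nat_Suc)
  qed
  have "e n * sc (1 / fact (Suc N)) (rise (XE X c) (Suc N)) = sc (1 / of_nat (Suc N)) (e n * sc (1 / fact N) (rise (XE X c) N) * XE X (c + of_nat N))"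
    by (simp add: rise_XE scn mult.assoc del: of_nat_Suc)
  also have "\<dots> = sc (1 / of_nat (Suc N)) (\<Sum>s\<le>M. f s + g (Suc s))"
    unfolding IH sum_distrib_right using hg by (simp add: sc_mult_right)
  also have "(\<Sum>s\<le>M. f s + g (Suc s)) = (\<Sum>s\<le>M. f s + g s)"
  proof -
    have g0: "g 0 = 0" by (simp add: g_def)
    have "(\<Sum>s\<le>M. g (Suc s)) = (\<Sum>s\<le>Suc M. g s)" by (simp only: sum.atMost_Suc_shift g0 add_0_left)
    also have "\<dots> = (\<Sum>s\<le>M. g s) + g (Suc M)" by (rule sum.atMost_Suc)
    also have "g (Suc M) = 0" using Suc.prems by (simp add: g_def Rr_big)
    finally show ?thesis by (simp add: sum.distrib)
  qed
  also have "sc (1 / of_nat (Suc N)) (\<Sum>s\<le>M. f s + g s) = (\<Sum>s\<le>M. sc (\<kappa> s) (Rr X (c' + of_nat s) (Suc N) s * e (n - int s)))"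
    unfolding sc_sum
  proof (rule sum.cong[OF refl])
    fix s
    have "f s + g s = sc (\<kappa> s) ((Rr X (c' + of_nat s) N s * XE X (c' + of_nat s + of_nat N) + sc (of_nat s) (Rr X (c' + of_nat s - 1) N (s - 1))) * e (n - int s))"
      unfolding f_def g_def by (simp add: distrib_right sc_add scn sc_sc)
    then show "sc (1 / of_nat (Suc N)) (f s + g s) = sc (\<kappa> s) (Rr X (c' + of_nat s) (Suc N) s * e (n - int s))"
      using Q_rise[of N X "c' + of_nat s" s] by (simp add: sc_comm[of "1 / of_nat (Suc N)"] sc_mult_right[symmetric] del: of_nat_Suc)
  qed
  finally show ?case by (simp add: x_def c'_def \<kappa>_def)
qed

lemma A_fall:
  assumes mm: "mm \<noteq> 0"
    and eX: "\<And>k. e k * X = XE X (- ((x0 + of_int k * mm) / mm)) * e k - sc (\<alpha> * (x0 + of_int k * mm + \<gamma> * mm)) (e (k - 1))"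
  shows "M \<ge> N \<Longrightarrow> e n * sc (1 / fact N) (fall (XE X c) N)
    = (\<Sum>s\<le>M. sc (kap \<alpha> \<gamma> mm (x0 + of_int n * mm) s) (Rf X (c - (x0 + of_int n * mm) / mm) N s * e (n - int s)))"
proof (induct N arbitrary: M)
  case 0
  show ?case
    by (subst sum_atMost_single0) (auto simp: Rf_def)
next
  case (Suc N)
  define x where "x = x0 + of_int n * mm"
  define c' where "c' = c - x / mm"
  define \<kappa> where "\<kappa> = kap \<alpha> \<gamma> mm x"
  have IH: "e n * sc (1 / fact N) (fall (XE X c) N) = (\<Sum>s\<le>M. sc (\<kappa> s) (Rf X c' N s * e (n - int s)))"
    using Suc by (simp add: x_def c'_def \<kappa>_def)
  have step_e: "e (n - int s) * XE X (c - of_nat N) = XE X (c' + of_nat s - of_nat N) * e (n - int s)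
      - sc (\<alpha> * (x0 + of_int (n - int s) * mm + \<gamma> * mm)) (e (n - int s - 1))" for s
  proof -
    have "c - of_nat N - (x0 + of_int (n - int s) * mm) / mm = c' + of_nat s - of_nat N"
      using mm by (simp add: c'_def x_def field_simps)
    note eq = this
    show ?thesis apply (subst eXE[where e=e and k="n - int s" and X=X and xk="x0 + of_int (n - int s) * mm" and mm=mm
        and b="\<alpha> * (x0 + of_int (n - int s) * mm + \<gamma> * mm)" and d="c - of_nat N", OF eX]) by (simp only: eq)
  qed
  define f where "f s = sc (\<kappa> s) (Rf X c' N s * XE X (c' + of_nat s - of_nat N) * e (n - int s))" for s
  define g where "g s = sc (\<kappa> s * of_nat s) (Rf X c' N (s - 1) * e (n - int s))" for s
  have hg: "sc (\<kappa> s) (Rf X c' N s * e (n - int s) * XE X (c - of_nat N)) = f s + g (Suc s)" for s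
  proof -
    have k: "\<kappa> (Suc s) * of_nat (Suc s) = - (\<kappa> s * (\<alpha> * (x0 + of_int (n - int s) * mm + \<gamma> * mm)))"
      unfolding \<kappa>_def kap_Suc by (simp add: x_def algebra_simps)
    have gS: "g (Suc s) = sc (- (\<kappa> s * (\<alpha> * (x0 + of_int (n - int s) * mm + \<gamma> * mm)))) (Rf X c' N s * e (n - int s - 1))"
      unfolding g_def k by (simp add: diff_diff_eq add.commute)
    show ?thesis
      unfolding gS f_def mult.assoc step_e
      by (simp add: right_diff_distrib sc_diff scn sc_uminus sc_sc del: of_nat_Suc)
  qed
  have "e n * sc (1 / fact (Suc N)) (fall (XE X c) (Suc N)) = sc (1 / of_nat (Suc N)) (e n * sc (1 / fact N) (fall (XE X c) N) * XE X (c - of_nat N))"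
    by (simp add: fall_XE scn mult.assoc del: of_nat_Suc)
  also have "\<dots> = sc (1 / of_nat (Suc N)) (\<Sum>s\<le>M. f s + g (Suc s))"
    unfolding IH sum_distrib_right using hg by (simp add: sc_mult_right)
  also have "(\<Sum>s\<le>M. f s + g (Suc s)) = (\<Sum>s\<le>M. f s + g s)"
  proof -
    have g0: "g 0 = 0" by (simp add: g_def)
    have "(\<Sum>s\<le>M. g (Suc s)) = (\<Sum>s\<le>Suc M. g s)" by (simp only: sum.atMost_Suc_shift g0 add_0_left)
    also have "\<dots> = (\<Sum>s\<le>M. g s) + g (Suc M)" by (rule sum.atMost_Suc)
    also have "g (Suc M) = 0" using Suc.prems by (simp add: g_def Rf_big)
    finally show ?thesis by (simp add: sum.distrib)
  qed
  also have "sc (1 / of_nat (Suc N)) (\<Sum>s\<le>M. f s + g s) = (\<Sum>s\<le>M. sc (\<kappa> s) (Rf X c' (Suc N) s * e (n - int s)))"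
    unfolding sc_sum
  proof (rule sum.cong[OF refl])
    fix s
    have "f s + g s = sc (\<kappa> s) ((Rf X c' N s * XE X (c' + of_nat s - of_nat N) + sc (of_nat s) (Rf X c' N (s - 1))) * e (n - int s))"
      unfolding f_def g_def by (simp add: distrib_right sc_add scn sc_sc)
    then show "sc (1 / of_nat (Suc N)) (f s + g s) = sc (\<kappa> s) (Rf X c' (Suc N) s * e (n - int s))"
      using Q_fall[of N X "c'" s] by (simp add: sc_comm[of "1 / of_nat (Suc N)"] sc_mult_right[symmetric] del: of_nat_Suc)
  qed
  finally show ?case by (simp add: x_def c'_def \<kappa>_def)
qed

end

lemma gbin_pascal: "gbin m (y + m) (Suc r) = gbin m y (Suc r) + m * gbin m y r"
proof (induct r)
  case 0 then show ?case by (simp add: gbin_def)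
next
  case (Suc r)
  have "gbin m (y + m) (Suc (Suc r)) = gbin m (y + m) (Suc r) * (y + m - of_nat (Suc r) * m) / of_nat (Suc (Suc r))"
    by (rule gbin_Suc)
  also have "\<dots> = (gbin m y (Suc r) + m * gbin m y r) * (y - of_nat r * m) / of_nat (Suc (Suc r))"
    by (simp only: Suc) (simp add: algebra_simps)
  also have "\<dots> = gbin m y (Suc (Suc r)) + m * gbin m y (Suc r)"
    unfolding gbin_Suc[of m y "Suc r"] gbin_Suc[of m y r]
    by (simp add: field_simps del: of_nat_Suc) (simp add: algebra_simps)
  finally show ?case .
qed

lemma E_ident:
  fixes y m g :: "'f::field_char_0"
  shows "(y - 2 * g * m) * gbin m (y + m) r =
     gbin m y r * (y - of_nat r * m - 2 * g * m)
   + (if 1 \<le> r then 2 * m * gbin m y (r - 1) * (y - g * m - (of_nat r - 1) * m) else 0)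
   + (if 2 \<le> r then m ^ 2 * gbin m y (r - 2) * (y - (of_nat r - 2) * m) else 0)"
proof (cases r)
  case 0 then show ?thesis by simp
next
  case (Suc r')
  show ?thesis
  proof (cases r')
    case 0 then show ?thesis using Suc by (simp add: gbin_def algebra_simps)
  next
    case (Suc r'')
    have r: "r = Suc (Suc r'')" using \<open>r = Suc r'\<close> Suc by simp
    have p: "gbin m (y + m) r = gbin m y (Suc (Suc r'')) + m * gbin m y (Suc r'')"
      unfolding r by (rule gbin_pascal)
    have b1: "gbin m y (Suc r'') = gbin m y r'' * (y - of_nat r'' * m) / of_nat (Suc r'')"
      by (rule gbin_Suc)
    have b2: "gbin m y (Suc (Suc r'')) = gbin m y r'' * (y - of_nat r'' * m) / of_nat (Suc r'') * (y - of_nat (Suc r'') * m) / of_nat (Suc (Suc r''))"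
      unfolding b1[symmetric] by (rule gbin_Suc)
    show ?thesis unfolding p unfolding r
      apply (simp only: b2 b1 diff_Suc_1 diff_Suc_Suc minus_nat.diff_0 if_True)
      apply (simp add: field_simps del: of_nat_Suc)
      apply (simp add: algebra_simps power2_eq_square)
      done
  qed
qed


definition acg :: "'f::field_char_0 \<Rightarrow> 'f \<Rightarrow> 'f \<Rightarrow> nat \<Rightarrow> nat \<Rightarrow> 'f" where
  "acg mm g x s p = (\<Sum>q\<le>p. (-1) ^ q * gbin mm (x + g * mm) q
      * gbin mm (x + (of_nat s - of_nat q - 1 - g) * mm) s
      * gbin mm (x + (of_nat s - of_nat q + g) * mm) (p - q))"

lemma prod_lessThan_split: "(\<Prod>j<q + (k::nat). f j) = (\<Prod>j<q. f j) * (\<Prod>j<k. f (q + j))"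
  by (induct k) (auto simp: mult.assoc)

lemma gbin_split:
  assumes "q \<le> P"
  shows "gbin m y q * gbin m (y - of_nat q * m) (P - q) = of_nat (P choose q) * gbin m y P"
proof -
  have P: "P = q + (P - q)" using assms by simp
  have "(\<Prod>j<P. y - of_nat j * m) = (\<Prod>j<q. y - of_nat j * m) * (\<Prod>j<P - q. y - of_nat q * m - of_nat j * m)"
    by (subst P, subst prod_lessThan_split) (simp add: algebra_simps)
  then show ?thesis unfolding gbin_def binomial_fact[OF assms] by (simp add: field_simps)
qed

lemma acg_0: "acg mm g x 0 P = (if P = 0 then 1 else 0)"
proof -
  have "acg mm g x 0 P = (\<Sum>q\<le>P. (-1) ^ q * of_nat (P choose q)) * gbin mm (x + g * mm) P"
    unfolding acg_def sum_distrib_right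
  proof (rule sum.cong[OF refl])
    fix q assume "q \<in> {..P}"
    then have q: "q \<le> P" by simp
    have e: "x + (of_nat 0 - of_nat q + g) * mm = (x + g * mm) - of_nat q * mm" by (simp add: algebra_simps)
    show "(-1) ^ q * gbin mm (x + g * mm) q * gbin mm (x + (of_nat 0 - of_nat q - 1 - g) * mm) 0 *
        gbin mm (x + (of_nat 0 - of_nat q + g) * mm) (P - q) = (-1) ^ q * of_nat (P choose q) * gbin mm (x + g * mm) P"
      unfolding e gbin_0 mult_1_right using gbin_split[OF q, of mm "x + g * mm"] by (simp add: mult.assoc)
  qed
  then show ?thesis by (cases "P = 0") (auto simp: choose_alternating_sum)
qed

lemma set_le: "k \<le> (P::nat) \<Longrightarrow> {..P} \<inter> {q. k \<le> P - q} = {..P - k}"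
  by auto

lemma sum_if_le: "k \<le> (P::nat) \<Longrightarrow> (\<Sum>q\<le>P. (if k \<le> P - q then F q else 0)) = (\<Sum>q\<le>P - k. F q)"
proof -
  assume k: "k \<le> P"
  have "{..P} \<inter> {q. k \<le> P - q} = {..P - k}" using k by (rule set_le)
  then show ?thesis by (simp add: sum.If_cases)
qed

lemma acg_rec:
  fixes mm g x :: "'f::field_char_0"
  shows "of_nat (Suc s) * acg mm g x (Suc s) P =
     (x + (of_nat s - of_nat P) * mm - g * mm) * acg mm g x s P
   + (if 1 \<le> P then 2 * mm * (x + (of_nat s + 1 - of_nat P) * mm) * acg mm g x s (P - 1) else 0)
   + (if 2 \<le> P then mm ^ 2 * (x + (of_nat s + 2 - of_nat P) * mm + g * mm) * acg mm g x s (P - 2) else 0)"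
proof -
  define W where "W q = (-1) ^ q * gbin mm (x + g * mm) q * gbin mm (x + (of_nat s - of_nat q - 1 - g) * mm) s" for q
  define y where "y q = x + (of_nat s - of_nat q + g) * mm" for q
  define c1 where "c1 = x + (of_nat s - of_nat P) * mm - g * mm"
  define c2 where "c2 = 2 * mm * (x + (of_nat s + 1 - of_nat P) * mm)"
  define c3 where "c3 = mm ^ 2 * (x + (of_nat s + 2 - of_nat P) * mm + g * mm)"
  have acs: "acg mm g x s P' = (\<Sum>q\<le>P'. W q * gbin mm (y q) (P' - q))" for P'
    unfolding acg_def W_def y_def ..
  have trm: "(-1) ^ q * gbin mm (x + g * mm) q * gbin mm (x + (of_nat (Suc s) - of_nat q - 1 - g) * mm) (Suc s)
      * gbin mm (x + (of_nat (Suc s) - of_nat q + g) * mm) (P - q) * of_nat (Suc s)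
    = c1 * (W q * gbin mm (y q) (P - q))
      + (if 1 \<le> P - q then c2 * (W q * gbin mm (y q) (P - 1 - q)) else 0)
      + (if 2 \<le> P - q then c3 * (W q * gbin mm (y q) (P - 2 - q)) else 0)" if q: "q \<le> P" for q
  proof -
    have a1: "x + (of_nat (Suc s) - of_nat q - 1 - g) * mm - mm = x + (of_nat s - of_nat q - 1 - g) * mm"
      by (simp add: algebra_simps)
    have a2: "x + (of_nat (Suc s) - of_nat q - 1 - g) * mm = y q - 2 * g * mm" by (simp add: y_def algebra_simps)
    have a3: "x + (of_nat (Suc s) - of_nat q + g) * mm = y q + mm" by (simp add: y_def algebra_simps)
    have b: "gbin mm (x + (of_nat (Suc s) - of_nat q - 1 - g) * mm) (Suc s) * of_nat (Suc s)
      = (y q - 2 * g * mm) * gbin mm (x + (of_nat s - of_nat q - 1 - g) * mm) s"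
      unfolding gbin_Suc'[of mm] a1 by (simp add: a2 del: of_nat_Suc)
    have oq: "of_nat (P - q) = (of_nat P - of_nat q :: 'f)" using q by simp
    have e1: "y q - of_nat (P - q) * mm - 2 * g * mm = c1" unfolding oq c1_def y_def by (simp add: algebra_simps)
    have e2: "1 \<le> P - q \<Longrightarrow> 2 * mm * (y q - g * mm - (of_nat (P - q) - 1) * mm) = c2" unfolding oq c2_def y_def by (simp add: algebra_simps)
    have e3: "2 \<le> P - q \<Longrightarrow> mm ^ 2 * (y q - (of_nat (P - q) - 2) * mm) = c3" unfolding oq c3_def y_def by (simp add: algebra_simps)
    have d1: "P - q - 1 = P - 1 - q" "P - q - 2 = P - 2 - q" by auto
    have "(-1) ^ q * gbin mm (x + g * mm) q * gbin mm (x + (of_nat (Suc s) - of_nat q - 1 - g) * mm) (Suc s)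
      * gbin mm (x + (of_nat (Suc s) - of_nat q + g) * mm) (P - q) * of_nat (Suc s)
      = (-1) ^ q * gbin mm (x + g * mm) q * (gbin mm (x + (of_nat (Suc s) - of_nat q - 1 - g) * mm) (Suc s) * of_nat (Suc s)) * gbin mm (y q + mm) (P - q)"
      unfolding a3 by (simp only: mult_ac)
    also have "\<dots> = W q * ((y q - 2 * g * mm) * gbin mm (y q + mm) (P - q))"
      unfolding b W_def by (simp only: mult_ac)
    also have "\<dots> = W q * (gbin mm (y q) (P - q) * c1
        + (if 1 \<le> P - q then c2 * gbin mm (y q) (P - q - 1) else 0)
        + (if 2 \<le> P - q then c3 * gbin mm (y q) (P - q - 2) else 0))"
      using E_ident[of "y q" g mm "P - q"] unfolding e1 unfolding c2_def c3_def y_def oq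
      by (auto simp: algebra_simps simp del: of_nat_Suc)
    finally show ?thesis unfolding d1 by (simp add: algebra_simps)
  qed
  have "of_nat (Suc s) * acg mm g x (Suc s) P = (\<Sum>q\<le>P. c1 * (W q * gbin mm (y q) (P - q))
      + (if 1 \<le> P - q then c2 * (W q * gbin mm (y q) (P - 1 - q)) else 0)
      + (if 2 \<le> P - q then c3 * (W q * gbin mm (y q) (P - 2 - q)) else 0))"
    unfolding acg_def sum_distrib_left
    by (rule sum.cong[OF refl], subst trm[symmetric]) (auto simp: mult.commute)
  also have "\<dots> = c1 * acg mm g x s P
      + (\<Sum>q\<le>P. (if 1 \<le> P - q then c2 * (W q * gbin mm (y q) (P - 1 - q)) else 0))
      + (\<Sum>q\<le>P. (if 2 \<le> P - q then c3 * (W q * gbin mm (y q) (P - 2 - q)) else 0))"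
    unfolding sum.distrib acs sum_distrib_left ..
  also have "(\<Sum>q\<le>P. (if 1 \<le> P - q then c2 * (W q * gbin mm (y q) (P - 1 - q)) else 0))
     = (if 1 \<le> P then c2 * acg mm g x s (P - 1) else 0)"
    by (cases "1 \<le> P") (auto simp: sum_if_le acs sum_distrib_left intro!: sum.neutral)
  also have "(\<Sum>q\<le>P. (if 2 \<le> P - q then c3 * (W q * gbin mm (y q) (P - 2 - q)) else 0))
     = (if 2 \<le> P then c3 * acg mm g x s (P - 2) else 0)"
    by (cases "2 \<le> P") (auto simp: sum_if_le acs sum_distrib_left intro!: sum.neutral)
  finally show ?thesis unfolding c1_def c2_def c3_def .
qed

lemma acg_vanish: "2 * s < P \<Longrightarrow> acg mm g x s P = 0"
proof (induct s arbitrary: P)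
  case 0 then show ?case by (simp add: acg_0)
next
  case (Suc s)
  have "of_nat (Suc s) * acg mm g x (Suc s) P = 0"
    unfolding acg_rec using Suc by simp
  then show ?case by (simp del: of_nat_Suc)
qed


lemma sum_shift1: "f 0 = 0 \<Longrightarrow> g (Suc M) = 0 \<Longrightarrow> (\<And>p. f (Suc p) = g p) \<Longrightarrow>
   (\<Sum>P\<le>Suc M. f P) = (\<Sum>p\<le>Suc M. (g p :: 'a::comm_monoid_add))"
  by (simp only: sum.atMost_Suc_shift[of f] sum.atMost_Suc[of g]) simp

lemma sum_shift2: "f 0 = 0 \<Longrightarrow> f 1 = 0 \<Longrightarrow> g (Suc M) = 0 \<Longrightarrow> g (Suc (Suc M)) = 0 \<Longrightarrow> (\<And>p. f (Suc (Suc p)) = g p) \<Longrightarrow>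
   (\<Sum>P\<le>Suc (Suc M). f P) = (\<Sum>p\<le>Suc (Suc M). (g p :: 'a::comm_monoid_add))"
  by (simp only: sum.atMost_Suc_shift[of f] sum.atMost_Suc_shift[of "\<lambda>i. f (Suc i)"] sum.atMost_Suc[of g]) simp

context cemb begin

lemma ad_sc: "Y * sc c W - sc c W * Y = sc c (Y * W - W * Y)"
  by (simp add: sc_mult_left sc_mult_right sc_diff)
lemma ad_add: "(Y::'b) * (A + B) - (A + B) * Y = (Y * A - A * Y) + (Y * B - B * Y)"
  by (simp add: distrib_left distrib_right add_diff_add)
lemma ad_sum: "(Y::'b) * sum f S - sum f S * Y = (\<Sum>x\<in>S. Y * f x - f x * Y)"
  by (simp add: sum_distrib_left sum_distrib_right sum_subtractf)

lemma B_ad: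
  assumes hY: "\<And>n. Y * e n - e n * Y = sc (x0 + of_int n * mm - \<gamma> * mm) (e (n + 1))
      + sc (2 * \<alpha> * mm * (x0 + of_int n * mm)) (e n)
      + sc (\<alpha> ^ 2 * mm ^ 2 * (x0 + of_int n * mm + \<gamma> * mm)) (e (n - 1))"
  shows "2 * s \<le> M \<Longrightarrow> ((\<lambda>W. Y * W - W * Y) ^^ s) (e 0)
     = sc (fact s) (\<Sum>p\<le>M. sc (\<alpha> ^ p * acg mm \<gamma> x0 s p) (e (int s - int p)))"
proof (induct s arbitrary: M)
  case 0
  show ?case by (subst sum_atMost_single0) (auto simp: acg_0)
next
  case (Suc s)
  then have "2 \<le> M" by simp
  then obtain M2 where "M = 2 + M2" using le_Suc_ex by blast
  then have M: "M = Suc (Suc M2)" by simp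
  have IH: "((\<lambda>W. Y * W - W * Y) ^^ s) (e 0) = sc (fact s) (\<Sum>p\<le>M. sc (\<alpha> ^ p * acg mm \<gamma> x0 s p) (e (int s - int p)))"
    using Suc by simp
  have van: "acg mm \<gamma> x0 s P = 0" if "2 * s < P" for P using that by (rule acg_vanish)
  define T1 where "T1 p = sc (\<alpha> ^ p * acg mm \<gamma> x0 s p * (x0 + (of_nat s - of_nat p) * mm - \<gamma> * mm)) (e (int (Suc s) - int p))" for p
  define T2 where "T2 p = sc (\<alpha> ^ p * acg mm \<gamma> x0 s p * (2 * \<alpha> * mm * (x0 + (of_nat s - of_nat p) * mm))) (e (int s - int p))" for p
  define T3 where "T3 p = sc (\<alpha> ^ p * acg mm \<gamma> x0 s p * (\<alpha> ^ 2 * mm ^ 2 * (x0 + (of_nat s - of_nat p) * mm + \<gamma> * mm))) (e (int s - int p - 1))" for p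
  have "((\<lambda>W. Y * W - W * Y) ^^ Suc s) (e 0) = sc (fact s) (\<Sum>p\<le>M. T1 p + T2 p + T3 p)"
  proof -
    have "((\<lambda>W. Y * W - W * Y) ^^ Suc s) (e 0) = sc (fact s) (\<Sum>p\<le>M. sc (\<alpha> ^ p * acg mm \<gamma> x0 s p) (Y * e (int s - int p) - e (int s - int p) * Y))"
      by (simp add: IH ad_sc ad_sum)
    also have "\<dots> = sc (fact s) (\<Sum>p\<le>M. T1 p + T2 p + T3 p)"
    proof (rule arg_cong[where f="sc (fact s)"], rule sum.cong[OF refl])
      fix p
      have i: "int s - int p + 1 = int (Suc s) - int p" by simp
      have o: "(of_int (int s - int p) :: 'f) = of_nat s - of_nat p" by simp
      show "sc (\<alpha> ^ p * acg mm \<gamma> x0 s p) (Y * e (int s - int p) - e (int s - int p) * Y) = T1 p + T2 p + T3 p"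
        unfolding hY T1_def T2_def T3_def i o by (simp add: sc_add sc_sc)
    qed
    finally show ?thesis .
  qed
  also have "(\<Sum>p\<le>M. T1 p + T2 p + T3 p) = (\<Sum>P\<le>M. sc (\<alpha> ^ P * (of_nat (Suc s) * acg mm \<gamma> x0 (Suc s) P)) (e (int (Suc s) - int P)))"
  proof -
    define U2 where "U2 P = sc (\<alpha> ^ P * (if 1 \<le> P then 2 * mm * (x0 + (of_nat s + 1 - of_nat P) * mm) * acg mm \<gamma> x0 s (P - 1) else 0)) (e (int (Suc s) - int P))" for P
    define U3 where "U3 P = sc (\<alpha> ^ P * (if 2 \<le> P then mm ^ 2 * (x0 + (of_nat s + 2 - of_nat P) * mm + \<gamma> * mm) * acg mm \<gamma> x0 s (P - 2) else 0)) (e (int (Suc s) - int P))" for P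
    have s1: "(\<Sum>P\<le>M. U2 P) = (\<Sum>p\<le>M. T2 p)" unfolding M
    proof (rule sum_shift1)
      show "U2 0 = 0" by (simp add: U2_def)
      show "T2 (Suc (Suc M2)) = 0" using Suc.prems M by (simp add: T2_def van)
      fix p show "U2 (Suc p) = T2 p" unfolding U2_def T2_def
        by (rule arg_cong2[where f=sc]) (simp_all add: algebra_simps)
    qed
    have s2: "(\<Sum>P\<le>M. U3 P) = (\<Sum>p\<le>M. T3 p)" unfolding M
    proof (rule sum_shift2)
      show "U3 0 = 0" "U3 1 = 0" by (simp_all add: U3_def)
      show "T3 (Suc M2) = 0" "T3 (Suc (Suc M2)) = 0" using Suc.prems M by (simp_all add: T3_def van)
      fix p show "U3 (Suc (Suc p)) = T3 p" unfolding U3_def T3_def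
        by (rule arg_cong2[where f=sc]) (simp_all add: algebra_simps power2_eq_square)
    qed
    have "(\<Sum>P\<le>M. sc (\<alpha> ^ P * (of_nat (Suc s) * acg mm \<gamma> x0 (Suc s) P)) (e (int (Suc s) - int P)))
       = (\<Sum>P\<le>M. T1 P + U2 P + U3 P)"
      unfolding acg_rec T1_def U2_def U3_def
      by (rule sum.cong[OF refl]) (simp only: distrib_left sc_addc[symmetric] mult.assoc mult.commute[of "acg mm \<gamma> x0 s _"])
    also have "\<dots> = (\<Sum>p\<le>M. T1 p + T2 p + T3 p)" unfolding sum.distrib s1 s2 ..
    finally show ?thesis by simp
  qed
  also have "sc (fact s) (\<Sum>P\<le>M. sc (\<alpha> ^ P * (of_nat (Suc s) * acg mm \<gamma> x0 (Suc s) P)) (e (int (Suc s) - int P)))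
     = sc (fact (Suc s)) (\<Sum>P\<le>M. sc (\<alpha> ^ P * acg mm \<gamma> x0 (Suc s) P) (e (int (Suc s) - int P)))"
    by (simp add: sc_sum sc_sc algebra_simps del: of_nat_Suc)
  finally show ?case .
qed

end

lemma rise_add: "rise y (n + k) = rise y n * rise (y + of_nat n) k"
  by (induct k) (simp_all add: rise_Suc mult.assoc add.assoc)

lemma fall_add: "fall y (n + k) = fall y n * fall (y - of_nat n) k"
  by (induct k) (simp_all add: fall_Suc mult.assoc diff_diff_eq)

lemma comm_expand:
  fixes Z Y :: "'a::ring_1"
  shows "Z * Y ^ N = (\<Sum>s\<le>N. of_nat (N choose s) * (Y ^ (N - s) * ((\<lambda>W. W * Y - Y * W) ^^ s) Z))"
proof (induct N)
  case 0 then show ?case by simp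
next
  case (Suc N)
  define D where "D = (\<lambda>W. W * Y - Y * W)"
  define A where "A s = Y ^ (Suc N - s) * (D ^^ s) Z" for s
  have IH: "Z * Y ^ N = (\<Sum>s\<le>N. of_nat (N choose s) * (Y ^ (N - s) * (D ^^ s) Z))"
    using Suc by (simp add: D_def)
  have "Z * Y ^ Suc N = (Z * Y ^ N) * Y" by (simp only: power_Suc2 mult.assoc)
  also have "\<dots> = (\<Sum>s\<le>N. of_nat (N choose s) * (Y ^ (N - s) * ((D ^^ s) Z * Y)))"
    unfolding IH sum_distrib_right by (simp add: mult.assoc)
  also have "\<dots> = (\<Sum>s\<le>N. of_nat (N choose s) * A s) + (\<Sum>s\<le>N. of_nat (N choose s) * A (Suc s))"
  proof -
    have "(D ^^ s) Z * Y = Y * (D ^^ s) Z + (D ^^ Suc s) Z" for s by (simp add: D_def)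
    moreover have "Y ^ (N - s) * Y = Y ^ (Suc N - s)" if "s \<le> N" for s
      using that by (simp add: power_Suc2[symmetric] Suc_diff_le)
    ultimately show ?thesis unfolding A_def sum.distrib[symmetric]
      by (intro sum.cong refl) (auto simp: distrib_left distrib_right mult.assoc[symmetric])
  qed
  also have "(\<Sum>s\<le>N. of_nat (N choose s) * A s) = A 0 + (\<Sum>s\<le>N. of_nat (N choose Suc s) * A (Suc s))"
  proof -
    have "(\<Sum>s\<le>N. of_nat (N choose s) * A s) = (\<Sum>s\<le>Suc N. of_nat (N choose s) * A s)" by (simp add: binomial_eq_0)
    also have "\<dots> = A 0 + (\<Sum>s\<le>N. of_nat (N choose Suc s) * A (Suc s))"
      by (subst sum.atMost_Suc_shift) simp
    finally show ?thesis .
  qed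
  also have "A 0 + (\<Sum>s\<le>N. of_nat (N choose Suc s) * A (Suc s)) + (\<Sum>s\<le>N. of_nat (N choose s) * A (Suc s))
     = (\<Sum>s\<le>Suc N. of_nat (Suc N choose s) * A s)"
    by (subst sum.atMost_Suc_shift) (simp add: sum.distrib[symmetric] distrib_right add_ac)
  finally show ?case by (simp add: A_def D_def)
qed

lemma m1_comm: "((-1::'a::ring_1) ^ s) * A = A * (-1) ^ s"
  by (cases "even s") simp_all

lemma Dl_ad:
  fixes Z Y :: "'a::ring_1"
  shows "((\<lambda>W. W * Y - Y * W) ^^ s) Z = (-1) ^ s * ((\<lambda>W. Y * W - W * Y) ^^ s) Z"
proof (induct s)
  case (Suc s)
  define A where "A = ((\<lambda>W. Y * W - W * Y) ^^ s) Z"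
  have "((\<lambda>W. W * Y - Y * W) ^^ Suc s) Z = (-1) ^ s * A * Y - Y * ((-1) ^ s * A)"
    using Suc by (simp add: A_def)
  also have "\<dots> = (-1) ^ Suc s * (Y * A - A * Y)"
    by (simp add: right_diff_distrib mult.assoc[symmetric] m1_comm[of s Y, symmetric])
  finally show ?case by (simp add: A_def)
qed simp

context cemb begin

lemma Y_fall:
  assumes YX: "Y * X = XE X (-1) * Y"
  shows "Y * fall (XE X c) p = fall (XE X (c - 1)) p * Y"
proof (induct p arbitrary: c)
  case (Suc p)
  have yx: "Y * XE X d = XE X (d - 1) * Y" for d
  proof -
    have "Y * XE X d = Y * X + Y * emb d" by (simp add: XE_def distrib_left)
    also have "\<dots> = XE X (-1) * Y + emb d * Y" by (simp add: YX emb_comm[of d Y])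
    also have "\<dots> = XE X (d - 1) * Y" by (simp add: XE_def distrib_right left_diff_distrib add_ac)
    finally show ?thesis .
  qed
  show ?case unfolding fall_XE' mult.assoc[symmetric] yx
    by (simp add: mult.assoc Suc)
qed simp

lemma Ypow_fall:
  assumes YX: "Y * X = XE X (-1) * Y"
  shows "Y ^ n * fall (XE X c) p = fall (XE X (c - of_nat n)) p * Y ^ n"
proof (induct n arbitrary: c)
  case (Suc n)
  have "Y ^ Suc n * fall (XE X c) p = (Y * fall (XE X (c - of_nat n)) p) * Y ^ n"
    by (simp add: mult.assoc Suc)
  also have "\<dots> = fall (XE X (c - of_nat (Suc n))) p * Y ^ Suc n"
    by (simp add: Y_fall[OF YX] diff_diff_eq add.commute mult.assoc)
  finally show ?case .
qed simp

end

unbundle fps_syntax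

lemma fps_tsum_nth:
  assumes "\<And>s. N < s \<Longrightarrow> f s $ N = 0"
  shows "fps_tsum f $ N = (\<Sum>s\<le>N. f s $ N)"
proof -
  have "fps_tsum f $ N = (\<Sum>s\<in>{s. f s $ N \<noteq> 0}. f s $ N)" by (simp add: fps_tsum_def)
  also have "\<dots> = (\<Sum>s\<le>N. f s $ N)"
    by (rule sum.mono_neutral_left) (use assms not_le in auto)
  finally show ?thesis .
qed

lemma fps_monom_nth: "(fps_const (c::'a::ring_1) * fps_X ^ r) $ n = (if n = r then c else 0)"
  by (simp add: fps_X_power_mult_right_nth)

lemma fps_tsum_monom: "fps_tsum (\<lambda>r. fps_const (c r :: 'a::ring_1) * fps_X ^ r) $ n = c n"
proof -
  have "fps_tsum (\<lambda>r. fps_const (c r) * fps_X ^ r) $ n = (\<Sum>r\<le>n. (if n = r then c r else 0))"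
    by (subst fps_tsum_nth, simp_all only: fps_monom_nth) auto
  also have "\<dots> = c n" by (simp add: sum.delta')
  finally show ?thesis .
qed

lemma Fser_nth: "Fser emb m \<alpha> L1 L2 a $ n = emb (1 / fact n) * rise (Xel emb m \<alpha> L1 + emb a) n * Yel emb m \<alpha> L2 ^ n"
  unfolding Fser_def by (rule fps_tsum_monom)

lemma user_nth: "user emb m \<alpha> L a $ n = emb ((-1) ^ n / fact n) * fall (Xel emb m \<alpha> L + emb (- a)) n * Yel emb m \<alpha> L ^ n"
  unfolding user_def by (rule fps_tsum_monom)

lemma prod3_nth: "(fps_const (c::'a::ring_1) * F * (fps_const d * fps_X ^ s)) $ N = (if s \<le> N then c * F $ (N - s) * d else 0)"
proof -
  have "fps_const c * F * (fps_const d * fps_X ^ s) = (fps_const c * F * fps_const d) * fps_X ^ s"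
    by (simp add: mult.assoc)
  then show ?thesis by (simp add: fps_X_power_mult_right_nth not_less)
qed

lemma prod2_nth: "(F * (fps_const (d::'a::ring_1) * fps_X ^ s)) $ N = (if s \<le> N then F $ (N - s) * d else 0)"
proof -
  have "F * (fps_const d * fps_X ^ s) = (F * fps_const d) * fps_X ^ s"
    by (simp add: mult.assoc)
  then show ?thesis by (simp add: fps_X_power_mult_right_nth not_less)
qed

lemma dtsum_nth:
  "fps_tsum (\<lambda>s. fps_tsum (\<lambda>p. fps_const (Z s p :: 'a::ring_1) * fps_X ^ (s + p))) $ K = (\<Sum>s\<le>K. Z s (K - s))"
proof -
  have inner: "fps_tsum (\<lambda>p. fps_const (Z s p) * fps_X ^ (s + p)) $ K' = (if s \<le> K' then Z s (K' - s) else 0)" for s K'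
  proof -
    have "fps_tsum (\<lambda>p. fps_const (Z s p) * fps_X ^ (s + p)) $ K' = (\<Sum>p\<le>K'. (if K' = s + p then Z s p else 0))"
      by (subst fps_tsum_nth, simp_all only: fps_monom_nth) auto
    also have "\<dots> = (if s \<le> K' then Z s (K' - s) else 0)"
    proof (cases "s \<le> K'")
      case True
      have "(\<Sum>p\<le>K'. (if K' = s + p then Z s p else 0)) = (\<Sum>p\<le>K'. (if p = K' - s then Z s p else 0))"
        by (rule sum.cong) (use True in auto)
      then show ?thesis using True by (simp add: sum.delta')
    qed auto
    finally show ?thesis .
  qed
  show ?thesis by (subst fps_tsum_nth) (auto simp: inner)
qed

lemma tri_swap: "(\<Sum>n\<le>(N::nat). \<Sum>s\<le>N - n. h n s) = (\<Sum>s\<le>N. \<Sum>n\<le>N - s. (h n s :: 'a::comm_monoid_add))"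
proof -
  have a: "(\<Sum>s\<le>N - n. g s) = (\<Sum>s\<le>N. (if n + s \<le> N then g s else 0))" if "n \<le> N" for n and g :: "nat \<Rightarrow> 'a"
  proof -
    have "{..N} \<inter> {s. n + s \<le> N} = {..N - n}" using that by auto
    then show ?thesis by (simp add: sum.If_cases)
  qed
  have "(\<Sum>n\<le>N. \<Sum>s\<le>N - n. h n s) = (\<Sum>n\<le>N. \<Sum>s\<le>N. (if n + s \<le> N then h n s else 0))"
    by (rule sum.cong[OF refl]) (simp add: a)
  also have "\<dots> = (\<Sum>s\<le>N. \<Sum>n\<le>N. (if n + s \<le> N then h n s else 0))" by (rule sum.swap)
  also have "\<dots> = (\<Sum>s\<le>N. \<Sum>n\<le>N - s. h n s)"
    by (rule sum.cong[OF refl]) (simp add: a add.commute)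
  finally show ?thesis .
qed

lemma sum_rev: "(\<Sum>n\<le>(K::nat). f n) = (\<Sum>p\<le>K. (f (K - p) :: 'a::comm_monoid_add))"
  by (rule sum.reindex_bij_witness[where i="\<lambda>p. K - p" and j="\<lambda>p. K - p"]) auto


unbundle fps_syntax

lemma comm_pow: "(a::'a::monoid_mult) * b = b * a \<Longrightarrow> a * b ^ n = b ^ n * a"
  by (induct n) (simp_all add: mult.assoc[symmetric], metis mult.assoc)

context cemb begin

lemma P1gen:
  fixes E :: "int \<Rightarrow> 'b"
  assumes mm: "mm = of_int m"
    and Xd: "X = Xel emb m \<alpha> L1" and Yd: "Y = Yel emb m \<alpha> L2"
    and eX: "\<And>k. E (jz + k * m) * X = XE X (- ((xz + of_int k * mm) / mm)) * E (jz + k * m)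
        - sc (\<alpha> * (xz + of_int k * mm + \<gamma> * mm)) (E (jz + (k - 1) * m))"
    and m0: "mm \<noteq> 0"
    and EY: "\<And>k. E k * Y = Y * E k"
  shows "fps_const (E jz) * Fser emb m \<alpha> L1 L2 a = fps_tsum (\<lambda>s. fps_const (emb (kap \<alpha> \<gamma> mm xz s))
     * Fser emb m \<alpha> L1 L2 (a - xz / mm + of_nat s) * (fps_const (E (jz - int s * m) * Y ^ s) * fps_X ^ s))"
proof (rule fps_ext)
  fix N
  define e where "e k = E (jz + k * m)" for k
  have eX': "e k * X = XE X (- ((xz + of_int k * mm) / mm)) * e k - sc (\<alpha> * (xz + of_int k * mm + \<gamma> * mm)) (e (k - 1))" for k
    unfolding e_def by (rule eX)
  have A: "e 0 * sc (1 / fact N) (rise (XE X a) N)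
     = (\<Sum>s\<le>N. sc (kap \<alpha> \<gamma> mm xz s) (Rr X (a - xz / mm + of_nat s) N s * e (- int s)))"
    using A_rise[OF m0 eX', of N N 0 a] by simp
  have F: "Fser emb m \<alpha> L1 L2 c $ n = sc (1 / fact n) (rise (XE X c) n) * Y ^ n" for c n
    unfolding Fser_nth Xd Yd XE_def by (simp add: sc_def)
  have lhs: "(fps_const (E jz) * Fser emb m \<alpha> L1 L2 a) $ N = (e 0 * sc (1 / fact N) (rise (XE X a) N)) * Y ^ N"
    by (simp add: F e_def mult.assoc)
  have rhs: "fps_tsum (\<lambda>s. fps_const (emb (kap \<alpha> \<gamma> mm xz s))
     * Fser emb m \<alpha> L1 L2 (a - xz / mm + of_nat s) * (fps_const (E (jz - int s * m) * Y ^ s) * fps_X ^ s)) $ N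
     = (\<Sum>s\<le>N. sc (kap \<alpha> \<gamma> mm xz s) (Rr X (a - xz / mm + of_nat s) N s * e (- int s)) * Y ^ N)"
  proof (subst fps_tsum_nth)
    fix s assume "N < s" then show "(fps_const (emb (kap \<alpha> \<gamma> mm xz s))
     * Fser emb m \<alpha> L1 L2 (a - xz / mm + of_nat s) * (fps_const (E (jz - int s * m) * Y ^ s) * fps_X ^ s)) $ N = 0"
      by (simp only: prod3_nth) simp
  next
    show "(\<Sum>s\<le>N. (fps_const (emb (kap \<alpha> \<gamma> mm xz s))
     * Fser emb m \<alpha> L1 L2 (a - xz / mm + of_nat s) * (fps_const (E (jz - int s * m) * Y ^ s) * fps_X ^ s)) $ N) =
       (\<Sum>s\<le>N. sc (kap \<alpha> \<gamma> mm xz s) (Rr X (a - xz / mm + of_nat s) N s * e (- int s)) * Y ^ N)"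
    proof (rule sum.cong[OF refl])
      fix s assume "s \<in> {..N}"
      then have sN: "s \<le> N" by simp
      have ey: "e (- int s) * Y ^ (N - s) = Y ^ (N - s) * e (- int s)"
        unfolding e_def by (rule comm_pow) (rule EY)
      have yy: "Y ^ (N - s) * Y ^ s = Y ^ N" using sN by (simp add: power_add[symmetric])
      have ey'': "Y ^ (N - s) * (e (- int s) * Z) = e (- int s) * (Y ^ (N - s) * Z)" for Z
        by (simp add: mult.assoc[symmetric] ey)
      have yy': "Y ^ (N - s) * (Y ^ s) = Y ^ N" by (rule yy)
      have idx: "E (jz - int s * m) = e (- int s)" by (simp add: e_def)
      show "(fps_const (emb (kap \<alpha> \<gamma> mm xz s))
          * Fser emb m \<alpha> L1 L2 (a - xz / mm + of_nat s) * (fps_const (E (jz - int s * m) * Y ^ s) * fps_X ^ s)) $ N =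
          sc (kap \<alpha> \<gamma> mm xz s) (Rr X (a - xz / mm + of_nat s) N s * e (- int s)) * Y ^ N"
        unfolding prod3_nth F idx using sN
        by (simp add: Rr_def emb_mult_sc sc_mult_right sc_mult_left mult.assoc ey'' yy' sc_sc mult.commute)
    qed
  qed
  show "(fps_const (E jz) * Fser emb m \<alpha> L1 L2 a) $ N = fps_tsum (\<lambda>s. fps_const (emb (kap \<alpha> \<gamma> mm xz s))
     * Fser emb m \<alpha> L1 L2 (a - xz / mm + of_nat s) * (fps_const (E (jz - int s * m) * Y ^ s) * fps_X ^ s)) $ N"
    unfolding lhs rhs A sum_distrib_right ..
qed

end

unbundle fps_syntax

context cemb begin

lemma of_nat_sc: "of_nat n * W = sc (of_nat n) W" by (simp add: sc_def)
lemma m1_sc: "(-1) ^ s * W = sc ((-1) ^ s) W" by (simp add: sc_def emb_power)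

lemma XE_add_nat: "XE X c + of_nat n = XE X (c + of_nat n)"
  by (simp add: XE_def add.assoc)

lemma comm_XE: "E * X = X * E \<Longrightarrow> E * XE X c = XE X c * E"
  by (simp add: XE_def distrib_left distrib_right emb_comm[of c E])

lemma P3gen:
  fixes E :: "int \<Rightarrow> 'b"
  assumes mm: "mm = of_int m"
    and Xd: "X = Xel emb m \<alpha> L1" and Yd: "Y = Yel emb m \<alpha> L2"
    and hY: "\<And>k. Y * E (jz + k * m) - E (jz + k * m) * Y = sc (xz + of_int k * mm - \<gamma> * mm) (E (jz + (k + 1) * m))
      + sc (2 * \<alpha> * mm * (xz + of_int k * mm)) (E (jz + k * m))
      + sc (\<alpha> ^ 2 * mm ^ 2 * (xz + of_int k * mm + \<gamma> * mm)) (E (jz + (k - 1) * m))"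
    and EX: "\<And>k. E k * X = X * E k"
    and XY: "X * Y = Y * X"
  shows "fps_const (E jz) * Fser emb m \<alpha> L1 L2 a = fps_tsum (\<lambda>s. fps_const (emb ((-1) ^ s)) * Fser emb m \<alpha> L1 L2 (a + of_nat s)
     * (fps_const (\<Sum>p\<le>2 * s. emb (\<alpha> ^ p * acg mm \<gamma> xz s p) * rise (X + emb a) s * E (jz + (int s - int p) * m)) * fps_X ^ s))"
proof (rule fps_ext)
  fix N
  define e where "e k = E (jz + k * m)" for k
  define C where "C s = (\<Sum>p\<le>2 * s. sc (\<alpha> ^ p * acg mm \<gamma> xz s p) (e (int s - int p)))" for s
  have hY': "Y * e k - e k * Y = sc (xz + of_int k * mm - \<gamma> * mm) (e (k + 1))
      + sc (2 * \<alpha> * mm * (xz + of_int k * mm)) (e k)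
      + sc (\<alpha> ^ 2 * mm ^ 2 * (xz + of_int k * mm + \<gamma> * mm)) (e (k - 1))" for k
    unfolding e_def by (rule hY)
  have ad: "((\<lambda>W. Y * W - W * Y) ^^ s) (e 0) = sc (fact s) (C s)" for s
    unfolding C_def by (rule B_ad[OF hY']) simp
  have F: "Fser emb m \<alpha> L1 L2 c $ n = sc (1 / fact n) (rise (XE X c) n) * Y ^ n" for c n
    unfolding Fser_nth Xd Yd XE_def by (simp add: sc_def)
  have Erise: "E jz * rise (XE X a) N = rise (XE X a) N * E jz"
    by (rule rise_comm) (rule comm_XE[OF EX])
  have Yrise: "Y * rise (XE X a) s = rise (XE X a) s * Y" for s
    by (rule rise_comm) (rule comm_XE, simp add: XY)
  have Ypow_rise: "Y ^ k * rise (XE X a) s = rise (XE X a) s * Y ^ k" for k s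
    by (rule comm_pow[symmetric]) (rule Yrise[symmetric])
  have lhs: "(fps_const (E jz) * Fser emb m \<alpha> L1 L2 a) $ N
     = (\<Sum>s\<le>N. sc (of_nat (N choose s) * (-1) ^ s * fact s / fact N) (rise (XE X a) N * (Y ^ (N - s) * C s)))"
  proof -
    have "(fps_const (E jz) * Fser emb m \<alpha> L1 L2 a) $ N = sc (1 / fact N) (rise (XE X a) N * (e 0 * Y ^ N))"
      by (simp add: F e_def sc_mult_left mult.assoc[symmetric] Erise sc_mult_right)
    also have "e 0 * Y ^ N = (\<Sum>s\<le>N. sc (of_nat (N choose s) * (-1) ^ s * fact s) (Y ^ (N - s) * C s))"
      unfolding comm_expand[of "e 0" Y N] Dl_ad[where Y=Y and Z="e 0"] ad
      by (rule sum.cong[OF refl]) (simp add: of_nat_sc m1_sc sc_mult_left sc_sc mult.assoc mult.commute mult.left_commute)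
    finally show ?thesis
      by (simp add: sum_distrib_left sc_sum sc_mult_left sc_sc mult.commute)
  qed
  have rhs: "fps_tsum (\<lambda>s. fps_const (emb ((-1) ^ s)) * Fser emb m \<alpha> L1 L2 (a + of_nat s)
     * (fps_const (\<Sum>p\<le>2 * s. emb (\<alpha> ^ p * acg mm \<gamma> xz s p) * rise (X + emb a) s * E (jz + (int s - int p) * m)) * fps_X ^ s)) $ N
     = (\<Sum>s\<le>N. sc ((-1) ^ s / fact (N - s)) (rise (XE X a) N * (Y ^ (N - s) * C s)))"
  proof (subst fps_tsum_nth)
    fix s assume "N < s" then show "(fps_const (emb ((-1) ^ s)) * Fser emb m \<alpha> L1 L2 (a + of_nat s)
     * (fps_const (\<Sum>p\<le>2 * s. emb (\<alpha> ^ p * acg mm \<gamma> xz s p) * rise (X + emb a) s * E (jz + (int s - int p) * m)) * fps_X ^ s)) $ N = 0"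
      by (simp only: prod3_nth) simp
  next
    show "(\<Sum>s\<le>N. (fps_const (emb ((-1) ^ s)) * Fser emb m \<alpha> L1 L2 (a + of_nat s)
     * (fps_const (\<Sum>p\<le>2 * s. emb (\<alpha> ^ p * acg mm \<gamma> xz s p) * rise (X + emb a) s * E (jz + (int s - int p) * m)) * fps_X ^ s)) $ N)
     = (\<Sum>s\<le>N. sc ((-1) ^ s / fact (N - s)) (rise (XE X a) N * (Y ^ (N - s) * C s)))"
    proof (rule sum.cong[OF refl])
      fix s assume "s \<in> {..N}"
      then have sN: "s \<le> N" by simp
      have Cs: "(\<Sum>p\<le>2 * s. emb (\<alpha> ^ p * acg mm \<gamma> xz s p) * rise (X + emb a) s * E (jz + (int s - int p) * m))
          = rise (XE X a) s * C s"
        unfolding C_def e_def XE_def sum_distrib_left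
        by (rule sum.cong[OF refl]) (simp add: emb_mult_sc sc_mult_left sc_mult_right)
      have rr: "rise (XE X (a + of_nat s)) (N - s) * rise (XE X a) s = rise (XE X a) N"
      proof -
        have "rise (XE X a) N = rise (XE X a) (s + (N - s))" using sN by simp
        also have "\<dots> = rise (XE X a) s * rise (XE X (a + of_nat s)) (N - s)"
          by (simp add: rise_add XE_add_nat)
        finally show ?thesis by (simp add: rise_rise_comm)
      qed
      have "(fps_const (emb ((-1) ^ s)) * Fser emb m \<alpha> L1 L2 (a + of_nat s)
         * (fps_const (\<Sum>p\<le>2 * s. emb (\<alpha> ^ p * acg mm \<gamma> xz s p) * rise (X + emb a) s * E (jz + (int s - int p) * m)) * fps_X ^ s)) $ N
         = sc ((-1) ^ s) (sc (1 / fact (N - s)) (rise (XE X (a + of_nat s)) (N - s)) * Y ^ (N - s) * (rise (XE X a) s * C s))"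
        unfolding prod3_nth F Cs using sN by (simp add: emb_mult_sc sc_mult_right)
      also have "\<dots> = sc ((-1) ^ s / fact (N - s)) ((rise (XE X (a + of_nat s)) (N - s) * rise (XE X a) s) * (Y ^ (N - s) * C s))"
      proof -
        have yr: "Y ^ (N - s) * (rise (XE X a) s * C s) = rise (XE X a) s * (Y ^ (N - s) * C s)"
          by (simp add: mult.assoc[symmetric] Ypow_rise)
        show ?thesis by (simp add: sc_mult_right sc_sc mult.assoc yr)
      qed
      finally show "(fps_const (emb ((-1) ^ s)) * Fser emb m \<alpha> L1 L2 (a + of_nat s)
         * (fps_const (\<Sum>p\<le>2 * s. emb (\<alpha> ^ p * acg mm \<gamma> xz s p) * rise (X + emb a) s * E (jz + (int s - int p) * m)) * fps_X ^ s)) $ N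
         = sc ((-1) ^ s / fact (N - s)) (rise (XE X a) N * (Y ^ (N - s) * C s))" unfolding rr .
    qed
  qed
  show "(fps_const (E jz) * Fser emb m \<alpha> L1 L2 a) $ N = fps_tsum (\<lambda>s. fps_const (emb ((-1) ^ s)) * Fser emb m \<alpha> L1 L2 (a + of_nat s)
     * (fps_const (\<Sum>p\<le>2 * s. emb (\<alpha> ^ p * acg mm \<gamma> xz s p) * rise (X + emb a) s * E (jz + (int s - int p) * m)) * fps_X ^ s)) $ N"
    unfolding lhs rhs
  proof (rule sum.cong[OF refl], rule sc_cong)
    fix s assume "s \<in> {..N}"
    then have sN: "s \<le> N" by simp
    show "of_nat (N choose s) * (-1) ^ s * fact s / fact N = ((-1) ^ s / fact (N - s) :: 'f)"
      unfolding binomial_fact[OF sN] by (simp add: field_simps)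
  qed
qed

end

unbundle fps_syntax

context cemb begin

lemma XE_diff_nat: "XE X c - of_nat n = XE X (c - of_nat n)"
  by (simp add: XE_def add_diff_eq)

lemma P5gen:
  fixes E :: "int \<Rightarrow> 'b"
  assumes mm: "mm = of_int m" and m0: "mm \<noteq> 0"
    and Xd: "X = Xel emb m \<alpha> L1" and Yd: "Y = Yel emb m \<alpha> L1"
    and eX: "\<And>k. E (jz + k * m) * X = XE X (- ((xz + of_int k * mm) / mm)) * E (jz + k * m)
        - sc (\<alpha> * (xz + of_int k * mm + \<gamma> * mm)) (E (jz + (k - 1) * m))"
    and hY: "\<And>k. Y * E (jz + k * m) - E (jz + k * m) * Y = sc (xz + of_int k * mm - \<gamma> * mm) (E (jz + (k + 1) * m))
      + sc (2 * \<alpha> * mm * (xz + of_int k * mm)) (E (jz + k * m))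
      + sc (\<alpha> ^ 2 * mm ^ 2 * (xz + of_int k * mm + \<gamma> * mm)) (E (jz + (k - 1) * m))"
    and YX: "Y * X = XE X (-1) * Y"
  shows "fps_const (E jz) * user emb m \<alpha> L1 a = user emb m \<alpha> L1 (a + xz / mm) *
      fps_tsum (\<lambda>s. fps_tsum (\<lambda>p. fps_const (\<Sum>q\<le>2 * p.
          emb ((-1) ^ s * kap \<alpha> \<gamma> mm xz s * \<alpha> ^ q * acg mm \<gamma> (xz - of_nat s * mm) p q)
          * fall (X + emb (- a - xz / mm)) p * E (jz + (int p - int s - int q) * m) * Y ^ s) * fps_X ^ (s + p)))"
proof (rule fps_ext)
  fix N
  define c where "c = - a - xz / mm"
  define e where "e k = E (jz + k * m)" for k
  define Cs where "Cs s p = (\<Sum>q\<le>2 * p. sc (\<alpha> ^ q * acg mm \<gamma> (xz - of_nat s * mm) p q) (e (int p - int q - int s)))" for s p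
  define Z where "Z s p = (\<Sum>q\<le>2 * p.
          emb ((-1) ^ s * kap \<alpha> \<gamma> mm xz s * \<alpha> ^ q * acg mm \<gamma> (xz - of_nat s * mm) p q)
          * fall (X + emb (- a - xz / mm)) p * E (jz + (int p - int s - int q) * m) * Y ^ s)" for s p
  define K where "K s p = (-1) ^ (N - s - p + s) * kap \<alpha> \<gamma> mm xz s / fact (N - s - p)" for s p
  have eX': "e k * X = XE X (- ((xz + of_int k * mm) / mm)) * e k - sc (\<alpha> * (xz + of_int k * mm + \<gamma> * mm)) (e (k - 1))" for k
    unfolding e_def by (rule eX)
  have U: "user emb m \<alpha> L1 b $ n = sc ((-1) ^ n / fact n) (fall (XE X (- b)) n) * Y ^ n" for b n
    unfolding user_nth Xd Yd XE_def by (simp add: sc_def)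
  have ad: "((\<lambda>W. Y * W - W * Y) ^^ p) (e (- int s)) = sc (fact p) (Cs s p)" for s p
  proof -
    define e' where "e' k = e (k - int s)" for k
    have hY': "Y * e' k - e' k * Y = sc ((xz - of_nat s * mm) + of_int k * mm - \<gamma> * mm) (e' (k + 1))
      + sc (2 * \<alpha> * mm * ((xz - of_nat s * mm) + of_int k * mm)) (e' k)
      + sc (\<alpha> ^ 2 * mm ^ 2 * ((xz - of_nat s * mm) + of_int k * mm + \<gamma> * mm)) (e' (k - 1))" for k
    proof -
      have i: "jz + (k - int s) * m + m = jz + (k + 1 - int s) * m" "jz + (k - int s - 1) * m = jz + (k - 1 - int s) * m"
        by (simp_all add: algebra_simps)
      have o: "xz + of_int (k - int s) * mm = (xz - of_nat s * mm) + of_int k * mm" by (simp add: algebra_simps)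
      show ?thesis using hY[of "k - int s"] unfolding e'_def e_def o by (simp add: algebra_simps)
    qed
    have "((\<lambda>W. Y * W - W * Y) ^^ p) (e' 0) = sc (fact p) (\<Sum>q\<le>2 * p. sc (\<alpha> ^ q * acg mm \<gamma> (xz - of_nat s * mm) p q) (e' (int p - int q)))"
      by (rule B_ad[OF hY']) simp
    then show ?thesis unfolding Cs_def e'_def by (simp add: algebra_simps)
  qed
  have lhs: "(fps_const (E jz) * user emb m \<alpha> L1 a) $ N
     = (\<Sum>s\<le>N. \<Sum>p\<le>N - s. sc (K s p) (fall (XE X c) (N - s) * (Y ^ (N - s - p) * Cs s p * Y ^ s)))"
  proof -
    have A: "e 0 * sc (1 / fact N) (fall (XE X (- a)) N) = (\<Sum>s\<le>N. sc (kap \<alpha> \<gamma> mm xz s) (Rf X c N s * e (- int s)))"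
      using A_fall[OF m0 eX', of N N 0 "- a"] by (simp add: c_def)
    have "(fps_const (E jz) * user emb m \<alpha> L1 a) $ N = sc ((-1) ^ N) ((e 0 * sc (1 / fact N) (fall (XE X (- a)) N)) * Y ^ N)"
      by (simp add: U e_def sc_mult_left sc_mult_right sc_sc mult.assoc)
    also have "\<dots> = (\<Sum>s\<le>N. sc ((-1) ^ N * kap \<alpha> \<gamma> mm xz s / fact (N - s)) (fall (XE X c) (N - s) * (e (- int s) * Y ^ N)))"
      unfolding A sum_distrib_right sc_sum
      by (rule sum.cong[OF refl]) (simp add: Rf_def sc_mult_right sc_sc mult.assoc)
    also have "\<dots> = (\<Sum>s\<le>N. \<Sum>p\<le>N - s. sc (K s p) (fall (XE X c) (N - s) * (Y ^ (N - s - p) * Cs s p * Y ^ s)))"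
    proof (rule sum.cong[OF refl])
      fix s assume "s \<in> {..N}" then have sN: "s \<le> N" by simp
      have "e (- int s) * Y ^ N = (e (- int s) * Y ^ (N - s)) * Y ^ s"
        using sN by (simp add: mult.assoc power_add[symmetric])
      also have "e (- int s) * Y ^ (N - s) = (\<Sum>p\<le>N - s. sc (of_nat (N - s choose p) * (-1) ^ p * fact p) (Y ^ (N - s - p) * Cs s p))"
        unfolding comm_expand[of "e (- int s)" Y "N - s"] Dl_ad[where Y=Y and Z="e (- int s)"] ad
        by (rule sum.cong[OF refl]) (simp add: of_nat_sc m1_sc sc_mult_left sc_sc mult.assoc mult.commute mult.left_commute)
      finally have ey: "e (- int s) * Y ^ N = (\<Sum>p\<le>N - s. sc (of_nat (N - s choose p) * (-1) ^ p * fact p) (Y ^ (N - s - p) * Cs s p * Y ^ s))"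
        by (simp add: sum_distrib_right sc_mult_right)
      show "sc ((-1) ^ N * kap \<alpha> \<gamma> mm xz s / fact (N - s)) (fall (XE X c) (N - s) * (e (- int s) * Y ^ N))
          = (\<Sum>p\<le>N - s. sc (K s p) (fall (XE X c) (N - s) * (Y ^ (N - s - p) * Cs s p * Y ^ s)))"
        unfolding ey sum_distrib_left sc_sum
      proof (rule sum.cong[OF refl])
        fix p assume "p \<in> {..N - s}" then have pN: "p \<le> N - s" by simp
        have co: "(-1) ^ N * kap \<alpha> \<gamma> mm xz s / fact (N - s) * (of_nat (N - s choose p) * (-1) ^ p * fact p) = K s p"
        proof -
          have N: "N = (N - s - p) + s + p" using sN pN by simp
          have pw: "(-1::'f) ^ N * (-1) ^ p = (-1) ^ (N - s - p + s)"
            by (subst N) (simp add: power_add mult.assoc)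
          show ?thesis unfolding K_def binomial_fact[OF pN] using pw
            by (simp add: field_simps)
        qed
        show "sc ((-1) ^ N * kap \<alpha> \<gamma> mm xz s / fact (N - s)) (fall (XE X c) (N - s) * sc (of_nat (N - s choose p) * (-1) ^ p * fact p) (Y ^ (N - s - p) * Cs s p * Y ^ s))
            = sc (K s p) (fall (XE X c) (N - s) * (Y ^ (N - s - p) * Cs s p * Y ^ s))"
          by (simp only: sc_mult_left sc_sc co)
      qed
    qed
    finally show ?thesis .
  qed
  have rhs: "(user emb m \<alpha> L1 (a + xz / mm) * fps_tsum (\<lambda>s. fps_tsum (\<lambda>p. fps_const (Z s p) * fps_X ^ (s + p)))) $ N
     = (\<Sum>s\<le>N. \<Sum>p\<le>N - s. sc (K s p) (fall (XE X c) (N - s) * (Y ^ (N - s - p) * Cs s p * Y ^ s)))"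
  proof -
    have "(user emb m \<alpha> L1 (a + xz / mm) * fps_tsum (\<lambda>s. fps_tsum (\<lambda>p. fps_const (Z s p) * fps_X ^ (s + p)))) $ N
       = (\<Sum>n\<le>N. \<Sum>s\<le>N - n. user emb m \<alpha> L1 (a + xz / mm) $ n * Z s (N - n - s))"
      by (simp add: fps_mult_nth dtsum_nth atLeast0AtMost sum_distrib_left diff_diff_eq)
    also have "\<dots> = (\<Sum>s\<le>N. \<Sum>n\<le>N - s. user emb m \<alpha> L1 (a + xz / mm) $ n * Z s (N - n - s))"
      by (rule tri_swap)
    also have "\<dots> = (\<Sum>s\<le>N. \<Sum>p\<le>N - s. user emb m \<alpha> L1 (a + xz / mm) $ (N - s - p) * Z s p)"
    proof (rule sum.cong[OF refl])
      fix s assume "s \<in> {..N}"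
      show "(\<Sum>n\<le>N - s. user emb m \<alpha> L1 (a + xz / mm) $ n * Z s (N - n - s)) = (\<Sum>p\<le>N - s. user emb m \<alpha> L1 (a + xz / mm) $ (N - s - p) * Z s p)"
        by (subst sum_rev) (rule sum.cong[OF refl], subgoal_tac "N - (N - (s + x) + s) = x", auto)
    qed
    also have "\<dots> = (\<Sum>s\<le>N. \<Sum>p\<le>N - s. sc (K s p) (fall (XE X c) (N - s) * (Y ^ (N - s - p) * Cs s p * Y ^ s)))"
    proof (intro sum.cong[OF refl])
      fix s p assume "s \<in> {..N}" "p \<in> {..N - s}"
      then have sN: "s \<le> N" and pN: "p \<le> N - s" by auto
      define n where "n = N - s - p"
      have np: "n + p = N - s" using sN pN by (simp add: n_def)
      have ff: "fall (XE X c) n * fall (XE X (c - of_nat n)) p = fall (XE X c) (N - s)"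
        unfolding np[symmetric] fall_add XE_diff_nat ..
      have Zs: "Z s p = (\<Sum>q\<le>2 * p. sc ((-1) ^ s * kap \<alpha> \<gamma> mm xz s) (fall (XE X c) p * (sc (\<alpha> ^ q * acg mm \<gamma> (xz - of_nat s * mm) p q) (e (int p - int q - int s)) * Y ^ s)))"
        unfolding Z_def c_def e_def XE_def
        by (rule sum.cong[OF refl]) (simp add: emb_mult_sc sc_mult_left sc_mult_right sc_sc mult.assoc algebra_simps)
      then have Zs': "Z s p = sc ((-1) ^ s * kap \<alpha> \<gamma> mm xz s) (fall (XE X c) p * (Cs s p * Y ^ s))"
        unfolding Cs_def by (simp add: sc_sum sum_distrib_left sum_distrib_right)
      have ua: "- (a + xz / mm) = c" by (simp add: c_def)
      have "user emb m \<alpha> L1 (a + xz / mm) $ n * Z s p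
         = sc ((-1) ^ n / fact n * ((-1) ^ s * kap \<alpha> \<gamma> mm xz s)) (fall (XE X c) n * (Y ^ n * fall (XE X c) p) * (Cs s p * Y ^ s))"
        unfolding U Zs' ua by (simp add: sc_mult_left sc_mult_right sc_sc mult.assoc mult.commute mult.left_commute)
      also have "\<dots> = sc ((-1) ^ n / fact n * ((-1) ^ s * kap \<alpha> \<gamma> mm xz s)) (fall (XE X c) (N - s) * (Y ^ n * Cs s p * Y ^ s))"
        unfolding Ypow_fall[OF YX] ff[symmetric] by (simp add: mult.assoc)
      also have "(-1) ^ n / fact n * ((-1) ^ s * kap \<alpha> \<gamma> mm xz s) = K s p"
        unfolding K_def n_def by (simp add: power_add field_simps)
      finally show "user emb m \<alpha> L1 (a + xz / mm) $ (N - s - p) * Z s p = sc (K s p) (fall (XE X c) (N - s) * (Y ^ (N - s - p) * Cs s p * Y ^ s))"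
        unfolding n_def .
    qed
    finally show ?thesis .
  qed
  show "(fps_const (E jz) * user emb m \<alpha> L1 a) $ N = (user emb m \<alpha> L1 (a + xz / mm) *
      fps_tsum (\<lambda>s. fps_tsum (\<lambda>p. fps_const (\<Sum>q\<le>2 * p.
          emb ((-1) ^ s * kap \<alpha> \<gamma> mm xz s * \<alpha> ^ q * acg mm \<gamma> (xz - of_nat s * mm) p q)
          * fall (X + emb (- a - xz / mm)) p * E (jz + (int p - int s - int q) * m) * Y ^ s) * fps_X ^ (s + p)))) $ N"
    unfolding lhs rhs[unfolded Z_def] ..
qed

end

context cemb begin

lemma Xel_sc: "Xel emb m \<alpha> L = sc (1 / of_int m) (L 0 + sc (\<alpha> * of_int m) (L (- m)))"
  by (simp add: Xel_def sc_def)
lemma Yel_sc: "Yel emb m \<alpha> L = L m + sc (2 * \<alpha> * of_int m) (L 0) + sc (\<alpha> ^ 2 * of_int m ^ 2) (L (- m))"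
  by (simp add: Yel_def sc_def)

lemma eX_gen:
  assumes m0: "(of_int m :: 'f) \<noteq> 0"
    and h0: "L 0 * e n - e n * L 0 = sc x (e n)"
    and hm: "L (- m) * e n - e n * L (- m) = sc (x + g * of_int m) (e (n - 1))"
  shows "e n * Xel emb m \<alpha> L = XE (Xel emb m \<alpha> L) (- (x / of_int m)) * e n - sc (\<alpha> * (x + g * of_int m)) (e (n - 1))"
proof -
  have a: "e n * L 0 = L 0 * e n - sc x (e n)" using h0 by (simp add: algebra_simps)
  have b: "e n * L (- m) = L (- m) * e n - sc (x + g * of_int m) (e (n - 1))" using hm by (simp add: algebra_simps)
  have "e n * Xel emb m \<alpha> L = sc (1 / of_int m) (L 0 * e n - sc x (e n) + sc (\<alpha> * of_int m) (L (- m) * e n - sc (x + g * of_int m) (e (n - 1))))"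
    unfolding Xel_sc by (simp add: sc_mult_left distrib_left a b)
  also have "\<dots> = Xel emb m \<alpha> L * e n - sc (x / of_int m) (e n) - sc (\<alpha> * (x + g * of_int m)) (e (n - 1))"
    unfolding Xel_sc using m0
    by (simp add: sc_add sc_diff sc_sc sc_mult_right distrib_right algebra_simps)
  also have "Xel emb m \<alpha> L * e n - sc (x / of_int m) (e n) = XE (Xel emb m \<alpha> L) (- (x / of_int m)) * e n"
    by (simp add: XE_def distrib_right left_diff_distrib sc_def)
  finally show ?thesis .
qed

lemma hY_gen:
  assumes hp: "L m * e n - e n * L m = sc (x - g * of_int m) (e (n + 1))"
    and h0: "L 0 * e n - e n * L 0 = sc x (e n)"
    and hm: "L (- m) * e n - e n * L (- m) = sc (x + g * of_int m) (e (n - 1))"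
  shows "Yel emb m \<alpha> L * e n - e n * Yel emb m \<alpha> L = sc (x - g * of_int m) (e (n + 1))
      + sc (2 * \<alpha> * of_int m * x) (e n) + sc (\<alpha> ^ 2 * of_int m ^ 2 * (x + g * of_int m)) (e (n - 1))"
proof -
  have "Yel emb m \<alpha> L * e n - e n * Yel emb m \<alpha> L = (L m * e n - e n * L m) + sc (2 * \<alpha> * of_int m) (L 0 * e n - e n * L 0)
       + sc (\<alpha> ^ 2 * of_int m ^ 2) (L (- m) * e n - e n * L (- m))"
    unfolding Yel_sc by (simp add: distrib_left distrib_right sc_mult_left sc_mult_right sc_diff algebra_simps)
  then show ?thesis unfolding hp h0 hm by (simp add: sc_sc mult.assoc)
qed

lemma comm_Xel: "(\<And>k. a * L k = L k * a) \<Longrightarrow> a * Xel emb m \<alpha> L = Xel emb m \<alpha> L * a"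
  unfolding Xel_sc by (simp add: sc_mult_left sc_mult_right distrib_left distrib_right)
lemma comm_Yel: "(\<And>k. a * L k = L k * a) \<Longrightarrow> a * Yel emb m \<alpha> L = Yel emb m \<alpha> L * a"
  unfolding Yel_sc by (simp add: sc_mult_left sc_mult_right distrib_left distrib_right)

lemma YX_gen:
  assumes m0: "(of_int m :: 'f) \<noteq> 0"
    and rel: "\<And>i j. L i * L j - L j * L i = emb (of_int j - of_int i) * L (i + j)"
  shows "Yel emb m \<alpha> L * Xel emb m \<alpha> L = XE (Xel emb m \<alpha> L) (-1) * Yel emb m \<alpha> L"
proof -
  have c: "L i * L j = L j * L i + sc (of_int j - of_int i) (L (i + j))" for i j
    using rel[of i j] by (simp add: sc_def algebra_simps)
  define A where "A = L (- m)" define B where "B = L 0" define C where "C = L m"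
  have cBA: "B * A = A * B + sc (- of_int m) A" using c[of 0 "- m"] by (simp add: A_def B_def)
  have cCA: "C * A = A * C + sc (- 2 * of_int m) B" using c[of m "- m"] by (simp add: A_def B_def C_def)
  have cCB: "C * B = B * C + sc (- of_int m) C" using c[of m 0] by (simp add: B_def C_def)
  have X: "Xel emb m \<alpha> L = sc (1 / of_int m) (B + sc (\<alpha> * of_int m) A)" unfolding Xel_sc A_def B_def ..
  have Y: "Yel emb m \<alpha> L = C + sc (2 * \<alpha> * of_int m) B + sc (\<alpha> ^ 2 * of_int m ^ 2) A" unfolding Yel_sc A_def B_def C_def ..
  have "Yel emb m \<alpha> L * Xel emb m \<alpha> L - Xel emb m \<alpha> L * Yel emb m \<alpha> L
      = sc (1 / of_int m) ((C * B - B * C) + sc (\<alpha> * of_int m) (C * A - A * C) + sc (2 * \<alpha> * of_int m * (\<alpha> * of_int m)) (B * A - A * B)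
         + sc (\<alpha> ^ 2 * of_int m ^ 2) (A * B - B * A))"
    unfolding X Y
    by (simp add: distrib_left distrib_right sc_mult_left sc_mult_right sc_sc sc_add sc_diff algebra_simps)
  also have "\<dots> = - Yel emb m \<alpha> L"
  proof -
    have e1: "C * B - B * C = sc (- of_int m) C" using cCB by simp
    have e2: "C * A - A * C = sc (- 2 * of_int m) B" using cCA by simp
    have e3: "B * A - A * B = sc (- of_int m) A" using cBA by simp
    have e4: "A * B - B * A = sc (of_int m) A" using cBA by (simp add: sc_uminus)
    have fin: "sc a C + sc b B + sc c A + sc d A = sc a' C + sc b' B + sc c' A"
      if "a = a'" "b = b'" "c + d = c'" for a b c d a' b' c'
      using that by (simp add: sc_addc add.assoc)
    have "sc (1 / of_int m) ((C * B - B * C) + sc (\<alpha> * of_int m) (C * A - A * C) + sc (2 * \<alpha> * of_int m * (\<alpha> * of_int m)) (B * A - A * B)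
         + sc (\<alpha> ^ 2 * of_int m ^ 2) (A * B - B * A))
       = sc (1 / of_int m * - of_int m) C + sc (1 / of_int m * (\<alpha> * of_int m * (- 2 * of_int m))) B
         + sc (1 / of_int m * (2 * \<alpha> * of_int m * (\<alpha> * of_int m) * - of_int m)) A + sc (1 / of_int m * (\<alpha> ^ 2 * of_int m ^ 2 * of_int m)) A"
      unfolding e1 e2 e3 e4 by (simp only: sc_add sc_sc)
    also have "\<dots> = sc (-1) C + sc (- (2 * \<alpha> * of_int m)) B + sc (- (\<alpha> ^ 2 * of_int m ^ 2)) A"
      by (rule fin) (use m0 in \<open>simp_all add: field_simps power2_eq_square\<close>)
    also have "\<dots> = - Yel emb m \<alpha> L" unfolding Y by (simp add: sc_uminus)
    finally show ?thesis .
  qed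
  finally have "Yel emb m \<alpha> L * Xel emb m \<alpha> L = Xel emb m \<alpha> L * Yel emb m \<alpha> L - Yel emb m \<alpha> L"
    by (simp add: algebra_simps)
  then show ?thesis by (simp add: XE_def distrib_right left_diff_distrib)
qed

end

lemma acoef_acg: "acoef m r i s = acg (of_int m) 1 (of_int i) r s"
  unfolding acoef_def acg_def
proof (rule sum.cong[OF refl])
  fix p
  have "(of_int i + (of_nat r - of_nat p - 2) * of_int m :: 'a) = of_int i + (of_nat r - of_nat p - 1 - 1) * of_int m"
    by simp
  then show "(- 1) ^ p * gbin (of_int m) (of_int i + of_int m) p *
         gbin (of_int m) (of_int i + (of_nat r - of_nat p - 2) * of_int m) r *
         gbin (of_int m) (of_int i + (of_nat r - of_nat p + 1) * of_int m) (s - p) =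
         (- 1) ^ p * gbin (of_int m) (of_int i + 1 * of_int m) p *
         gbin (of_int m) (of_int i + (of_nat r - of_nat p - 1 - 1) * of_int m) r *
         gbin (of_int m) (of_int i + (of_nat r - of_nat p + 1) * of_int m) (s - p)" by simp
qed

lemma bcoef_acg: "bcoef m r k s = acg (of_int m) (1/2) k r s"
  unfolding bcoef_def acg_def
proof (rule sum.cong[OF refl])
  fix p
  have a: "(k + of_int m / 2 :: 'a) = k + 1 / 2 * of_int m" by simp
  have b: "(k + (of_nat r - of_nat p - 3 / 2) * of_int m :: 'a) = k + (of_nat r - of_nat p - 1 - 1 / 2) * of_int m"
    by (simp add: algebra_simps)
  show "(- 1) ^ p * gbin (of_int m) (k + of_int m / 2) p *
         gbin (of_int m) (k + (of_nat r - of_nat p - 3 / 2) * of_int m) r *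
         gbin (of_int m) (k + (of_nat r - of_nat p + 1 / 2) * of_int m) (s - p) =
         (- 1) ^ p * gbin (of_int m) (k + 1 / 2 * of_int m) p *
         gbin (of_int m) (k + (of_nat r - of_nat p - 1 - 1 / 2) * of_int m) r *
         gbin (of_int m) (k + (of_nat r - of_nat p + 1 / 2) * of_int m) (s - p)" unfolding a b ..
qed

context cemb begin

lemma famL:
  assumes rel: "\<And>i j. L i * L j - L j * L i = emb (of_int j - of_int i) * L (i + j)"
  shows "L 0 * L (i + n * m) - L (i + n * m) * L 0 = sc (of_int i + of_int n * of_int m) (L (i + n * m))"
    and "L (- m) * L (i + n * m) - L (i + n * m) * L (- m) = sc (of_int i + of_int n * of_int m + 1 * of_int m) (L (i + (n - 1) * m))"
    and "L m * L (i + n * m) - L (i + n * m) * L m = sc (of_int i + of_int n * of_int m - 1 * of_int m) (L (i + (n + 1) * m))"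
proof -
  show "L 0 * L (i + n * m) - L (i + n * m) * L 0 = sc (of_int i + of_int n * of_int m) (L (i + n * m))"
    using rel[of 0 "i + n * m"] by (simp add: sc_def)
  have "- m + (i + n * m) = i + (n - 1) * m" by (simp add: algebra_simps)
  then show "L (- m) * L (i + n * m) - L (i + n * m) * L (- m) = sc (of_int i + of_int n * of_int m + 1 * of_int m) (L (i + (n - 1) * m))"
    using rel[of "- m" "i + n * m"] by (simp add: sc_def algebra_simps)
  have "m + (i + n * m) = i + (n + 1) * m" by (simp add: algebra_simps)
  then show "L m * L (i + n * m) - L (i + n * m) * L m = sc (of_int i + of_int n * of_int m - 1 * of_int m) (L (i + (n + 1) * m))"
    using rel[of m "i + n * m"] by (simp add: sc_def algebra_simps)
qed

lemma famG:
  assumes rel: "\<And>i j. L i * G j - G j * L i = emb (of_int j + of_int eps2 / 2 - of_int i / 2) * G (i + j)"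
  shows "L 0 * G (j + n * m) - G (j + n * m) * L 0 = sc ((of_int j + of_int eps2 / 2) + of_int n * of_int m) (G (j + n * m))"
    and "L (- m) * G (j + n * m) - G (j + n * m) * L (- m) = sc ((of_int j + of_int eps2 / 2) + of_int n * of_int m + 1 / 2 * of_int m) (G (j + (n - 1) * m))"
    and "L m * G (j + n * m) - G (j + n * m) * L m = sc ((of_int j + of_int eps2 / 2) + of_int n * of_int m - 1 / 2 * of_int m) (G (j + (n + 1) * m))"
proof -
  show "L 0 * G (j + n * m) - G (j + n * m) * L 0 = sc ((of_int j + of_int eps2 / 2) + of_int n * of_int m) (G (j + n * m))"
    using rel[of 0 "j + n * m"] by (simp add: sc_def algebra_simps)
  have "- m + (j + n * m) = j + (n - 1) * m" by (simp add: algebra_simps)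
  then show "L (- m) * G (j + n * m) - G (j + n * m) * L (- m) = sc ((of_int j + of_int eps2 / 2) + of_int n * of_int m + 1 / 2 * of_int m) (G (j + (n - 1) * m))"
    using rel[of "- m" "j + n * m"] by (simp add: sc_def algebra_simps)
  have "m + (j + n * m) = j + (n + 1) * m" by (simp add: algebra_simps)
  then show "L m * G (j + n * m) - G (j + n * m) * L m = sc ((of_int j + of_int eps2 / 2) + of_int n * of_int m - 1 / 2 * of_int m) (G (j + (n + 1) * m))"
    using rel[of m "j + n * m"] by (simp add: sc_def algebra_simps)
qed

end

theorem lemma3p5:
  fixes emb :: "'f::field_char_0 \<Rightarrow> 'b::ring_1"
    and eps2 :: int and m :: int and \<alpha> :: 'f
    and L1 G1 L2 G2 :: "int \<Rightarrow> 'b"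
    and a :: 'f and i :: int and j :: int
  assumes emb: "central_emb emb"
    and eps: "eps2 \<in> {0, 1}"
    and m: "m \<noteq> 0"
    and rel1: "svir_rel emb eps2 L1 G1"
    and rel2: "svir_rel emb eps2 L2 G2"
    and comm: "svir_supercomm L1 G1 L2 G2"
  defines "k \<equiv> (of_int j + of_int eps2 / 2 :: 'f)"
    and "X \<equiv> Xel emb m \<alpha> L1"
    and "Y1 \<equiv> Yel emb m \<alpha> L1"
    and "Y2 \<equiv> Yel emb m \<alpha> L2"
    and "F \<equiv> Fser emb m \<alpha> L1 L2"
    and "u \<equiv> user emb m \<alpha> L1"
  shows
   "fps_const (L1 i) * F a =
      fps_tsum (\<lambda>s. fps_const (emb (\<alpha> ^ s * gbin (of_int m) (of_int ((int s - 2) * m - i)) s))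
        * F (a - of_int i / of_int m + of_nat s)
        * (fps_const (L1 (i - int s * m) * Y2 ^ s) * fps_X ^ s))
  \<and> fps_const (G1 j) * F a =
      fps_tsum (\<lambda>s. fps_const (emb (\<alpha> ^ s * gbin (of_int m) ((of_nat s - 3 / 2) * of_int m - k) s))
        * F (a - k / of_int m + of_nat s)
        * (fps_const (G1 (j - int s * m) * Y2 ^ s) * fps_X ^ s))
  \<and> fps_const (L2 i) * F a =
      fps_tsum (\<lambda>s. fps_const (emb ((-1) ^ s)) * F (a + of_nat s)
        * (fps_const (\<Sum>p\<le>2 * s. emb (\<alpha> ^ p * acoef m s i p)
              * rise (X + emb a) s * L2 (i + (int s - int p) * m)) * fps_X ^ s))
  \<and> fps_const (G2 j) * F a =
      fps_tsum (\<lambda>s. fps_const (emb ((-1) ^ s)) * F (a + of_nat s)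
        * (fps_const (\<Sum>p\<le>2 * s. emb (\<alpha> ^ p * bcoef m s k p)
              * rise (X + emb a) s * G2 (j + (int s - int p) * m)) * fps_X ^ s))
  \<and> fps_const (L1 i) * u a =
      u (a + of_int i / of_int m) *
      fps_tsum (\<lambda>s. fps_tsum (\<lambda>p. fps_const (\<Sum>q\<le>2 * p.
          emb ((-1) ^ s * \<alpha> ^ (s + q) * gbin (of_int m) (of_int ((int s - 2) * m - i)) s
                * acoef m p (i - int s * m) q)
          * fall (X + emb (- a - of_int i / of_int m)) p
          * L1 (i + (int p - int s - int q) * m) * Y1 ^ s) * fps_X ^ (s + p)))
  \<and> fps_const (G1 j) * u a =
      u (a + k / of_int m) *
      fps_tsum (\<lambda>s. fps_tsum (\<lambda>p. fps_const (\<Sum>q\<le>2 * p.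
          emb ((-1) ^ s * \<alpha> ^ (s + q) * gbin (of_int m) ((of_nat s - 3 / 2) * of_int m - k) s
                * bcoef m p (k - of_nat s * of_int m) q)
          * fall (X + emb (- a - k / of_int m)) p
          * G1 (j + (int p - int s - int q) * m) * Y1 ^ s) * fps_X ^ (s + p)))"
proof -
  interpret cemb emb by unfold_locales (rule emb)
  have m0: "(of_int m :: 'f) \<noteq> 0" using m by simp
  have Xd: "X = Xel emb m \<alpha> L1" and Y1d: "Y1 = Yel emb m \<alpha> L1" and Y2d: "Y2 = Yel emb m \<alpha> L2"
    using X_def Y1_def Y2_def by simp_all
  have LL1: "\<And>i j. L1 i * L1 j - L1 j * L1 i = emb (of_int j - of_int i) * L1 (i + j)"
    and LG1: "\<And>i j. L1 i * G1 j - G1 j * L1 i = emb (of_int j + of_int eps2 / 2 - of_int i / 2) * G1 (i + j)"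
    using rel1 unfolding svir_rel_def by blast+
  have LL2: "\<And>i j. L2 i * L2 j - L2 j * L2 i = emb (of_int j - of_int i) * L2 (i + j)"
    and LG2: "\<And>i j. L2 i * G2 j - G2 j * L2 i = emb (of_int j + of_int eps2 / 2 - of_int i / 2) * G2 (i + j)"
    using rel2 unfolding svir_rel_def by blast+
  have c1: "\<And>i j. L1 i * L2 j = L2 j * L1 i" and c2: "\<And>i j. L1 i * G2 j = G2 j * L1 i"
    and c3: "\<And>i j. G1 i * L2 j = L2 j * G1 i"
    using comm unfolding svir_supercomm_def by blast+
  have XL2: "L2 k' * X = X * L2 k'" for k' unfolding X_def by (rule comm_Xel) (simp add: c1)
  have XG2: "G2 k' * X = X * G2 k'" for k' unfolding X_def by (rule comm_Xel) (simp add: c2)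
  have YL1: "L1 k' * Y2 = Y2 * L1 k'" for k' unfolding Y2_def by (rule comm_Yel) (simp add: c1)
  have YG1: "G1 k' * Y2 = Y2 * G1 k'" for k' unfolding Y2_def by (rule comm_Yel) (simp add: c3)
  have XY2: "X * Y2 = Y2 * X" unfolding Y2_def by (rule comm_Yel) (simp add: XL2)
  have YX1: "Y1 * X = XE X (-1) * Y1" unfolding X_def Y1_def by (rule YX_gen[OF m0 LL1])
  have eXL: "L1 (i + n * m) * X = XE X (- ((of_int i + of_int n * of_int m) / of_int m)) * L1 (i + n * m)
      - sc (\<alpha> * (of_int i + of_int n * of_int m + 1 * of_int m)) (L1 (i + (n - 1) * m))" for n
    unfolding X_def
    by (rule eX_gen[where e="\<lambda>n. L1 (i + n * m)", OF m0 famL(1)[OF LL1] famL(2)[OF LL1]])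
  have eXG: "G1 (j + n * m) * X = XE X (- ((k + of_int n * of_int m) / of_int m)) * G1 (j + n * m)
      - sc (\<alpha> * (k + of_int n * of_int m + 1 / 2 * of_int m)) (G1 (j + (n - 1) * m))" for n
    unfolding X_def k_def
    by (rule eX_gen[where e="\<lambda>n. G1 (j + n * m)", OF m0 famG(1)[OF LG1] famG(2)[OF LG1]])
  have hYL2: "Y2 * L2 (i + n * m) - L2 (i + n * m) * Y2 = sc (of_int i + of_int n * of_int m - 1 * of_int m) (L2 (i + (n + 1) * m))
      + sc (2 * \<alpha> * of_int m * (of_int i + of_int n * of_int m)) (L2 (i + n * m))
      + sc (\<alpha> ^ 2 * of_int m ^ 2 * (of_int i + of_int n * of_int m + 1 * of_int m)) (L2 (i + (n - 1) * m))" for n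
    unfolding Y2_def
    by (rule hY_gen[where e="\<lambda>n. L2 (i + n * m)", OF famL(3)[OF LL2] famL(1)[OF LL2] famL(2)[OF LL2]])
  have hYG2: "Y2 * G2 (j + n * m) - G2 (j + n * m) * Y2 = sc (k + of_int n * of_int m - 1 / 2 * of_int m) (G2 (j + (n + 1) * m))
      + sc (2 * \<alpha> * of_int m * (k + of_int n * of_int m)) (G2 (j + n * m))
      + sc (\<alpha> ^ 2 * of_int m ^ 2 * (k + of_int n * of_int m + 1 / 2 * of_int m)) (G2 (j + (n - 1) * m))" for n
    unfolding Y2_def k_def
    by (rule hY_gen[where e="\<lambda>n. G2 (j + n * m)", OF famG(3)[OF LG2] famG(1)[OF LG2] famG(2)[OF LG2]])
  have hYL1: "Y1 * L1 (i + n * m) - L1 (i + n * m) * Y1 = sc (of_int i + of_int n * of_int m - 1 * of_int m) (L1 (i + (n + 1) * m))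
      + sc (2 * \<alpha> * of_int m * (of_int i + of_int n * of_int m)) (L1 (i + n * m))
      + sc (\<alpha> ^ 2 * of_int m ^ 2 * (of_int i + of_int n * of_int m + 1 * of_int m)) (L1 (i + (n - 1) * m))" for n
    unfolding Y1_def
    by (rule hY_gen[where e="\<lambda>n. L1 (i + n * m)", OF famL(3)[OF LL1] famL(1)[OF LL1] famL(2)[OF LL1]])
  have hYG1: "Y1 * G1 (j + n * m) - G1 (j + n * m) * Y1 = sc (k + of_int n * of_int m - 1 / 2 * of_int m) (G1 (j + (n + 1) * m))
      + sc (2 * \<alpha> * of_int m * (k + of_int n * of_int m)) (G1 (j + n * m))
      + sc (\<alpha> ^ 2 * of_int m ^ 2 * (k + of_int n * of_int m + 1 / 2 * of_int m)) (G1 (j + (n - 1) * m))" for n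
    unfolding Y1_def k_def
    by (rule hY_gen[where e="\<lambda>n. G1 (j + n * m)", OF famG(3)[OF LG1] famG(1)[OF LG1] famG(2)[OF LG1]])
  have kapL: "kap \<alpha> 1 (of_int m) (of_int i) s = \<alpha> ^ s * gbin (of_int m) (of_int ((int s - 2) * m - i)) s" for s
    unfolding kap_def by (simp add: algebra_simps)
  have kapG: "kap \<alpha> (1 / 2) (of_int m) k s = \<alpha> ^ s * gbin (of_int m) ((of_nat s - 3 / 2) * of_int m - k) s" for s
  proof -
    have "(of_nat s - 1 - 1 / 2) * of_int m - k = (of_nat s - 3 / 2) * of_int m - (k :: 'f)" by (simp add: algebra_simps)
    then show ?thesis unfolding kap_def by simp
  qed
  have cL: "(-1) ^ s * kap \<alpha> 1 (of_int m) (of_int i) s * \<alpha> ^ q * acg (of_int m) 1 (of_int i - of_nat s * of_int m) p q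
     = (-1) ^ s * \<alpha> ^ (s + q) * gbin (of_int m) (of_int ((int s - 2) * m - i)) s * acoef m p (i - int s * m) q" for s p q
    unfolding kapL acoef_acg by (simp add: power_add algebra_simps)
  have cG: "(-1) ^ s * kap \<alpha> (1 / 2) (of_int m) k s * \<alpha> ^ q * acg (of_int m) (1 / 2) (k - of_nat s * of_int m) p q
     = (-1) ^ s * \<alpha> ^ (s + q) * gbin (of_int m) ((of_nat s - 3 / 2) * of_int m - k) s * bcoef m p (k - of_nat s * of_int m) q" for s p q
    unfolding kapG bcoef_acg by (simp add: power_add algebra_simps)
  have P1: "fps_const (L1 i) * F a =
      fps_tsum (\<lambda>s. fps_const (emb (\<alpha> ^ s * gbin (of_int m) (of_int ((int s - 2) * m - i)) s))
        * F (a - of_int i / of_int m + of_nat s)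
        * (fps_const (L1 (i - int s * m) * Y2 ^ s) * fps_X ^ s))"
    using P1gen[where E=L1 and jz=i and xz="of_int i" and \<gamma>=1 and mm="of_int m", OF refl Xd Y2d eXL m0 YL1]
    unfolding F_def kapL .
  have P2: "fps_const (G1 j) * F a =
      fps_tsum (\<lambda>s. fps_const (emb (\<alpha> ^ s * gbin (of_int m) ((of_nat s - 3 / 2) * of_int m - k) s))
        * F (a - k / of_int m + of_nat s)
        * (fps_const (G1 (j - int s * m) * Y2 ^ s) * fps_X ^ s))"
    using P1gen[where E=G1 and jz=j and xz=k and \<gamma>="1/2" and mm="of_int m", OF refl Xd Y2d eXG m0 YG1]
    unfolding F_def kapG .
  have P3: "fps_const (L2 i) * F a =
      fps_tsum (\<lambda>s. fps_const (emb ((-1) ^ s)) * F (a + of_nat s)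
        * (fps_const (\<Sum>p\<le>2 * s. emb (\<alpha> ^ p * acoef m s i p)
              * rise (X + emb a) s * L2 (i + (int s - int p) * m)) * fps_X ^ s))"
    using P3gen[where E=L2 and jz=i and xz="of_int i" and \<gamma>=1 and mm="of_int m", OF refl Xd Y2d hYL2 XL2 XY2]
    unfolding F_def acoef_acg .
  have P4: "fps_const (G2 j) * F a =
      fps_tsum (\<lambda>s. fps_const (emb ((-1) ^ s)) * F (a + of_nat s)
        * (fps_const (\<Sum>p\<le>2 * s. emb (\<alpha> ^ p * bcoef m s k p)
              * rise (X + emb a) s * G2 (j + (int s - int p) * m)) * fps_X ^ s))"
    using P3gen[where E=G2 and jz=j and xz=k and \<gamma>="1/2" and mm="of_int m", OF refl Xd Y2d hYG2 XG2 XY2]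
    unfolding F_def bcoef_acg .
  have P5: "fps_const (L1 i) * u a =
      u (a + of_int i / of_int m) *
      fps_tsum (\<lambda>s. fps_tsum (\<lambda>p. fps_const (\<Sum>q\<le>2 * p.
          emb ((-1) ^ s * \<alpha> ^ (s + q) * gbin (of_int m) (of_int ((int s - 2) * m - i)) s
                * acoef m p (i - int s * m) q)
          * fall (X + emb (- a - of_int i / of_int m)) p
          * L1 (i + (int p - int s - int q) * m) * Y1 ^ s) * fps_X ^ (s + p)))"
    using P5gen[where E=L1 and jz=i and xz="of_int i" and \<gamma>=1 and mm="of_int m", OF refl m0 Xd Y1d eXL hYL1 YX1]
    unfolding u_def cL .
  have P6: "fps_const (G1 j) * u a =
      u (a + k / of_int m) *
      fps_tsum (\<lambda>s. fps_tsum (\<lambda>p. fps_const (\<Sum>q\<le>2 * p.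
          emb ((-1) ^ s * \<alpha> ^ (s + q) * gbin (of_int m) ((of_nat s - 3 / 2) * of_int m - k) s
                * bcoef m p (k - of_nat s * of_int m) q)
          * fall (X + emb (- a - k / of_int m)) p
          * G1 (j + (int p - int s - int q) * m) * Y1 ^ s) * fps_X ^ (s + p)))"
    using P5gen[where E=G1 and jz=j and xz=k and \<gamma>="1/2" and mm="of_int m", OF refl m0 Xd Y1d eXG hYG1 YX1]
    unfolding u_def cG .
  show ?thesis using P1 P2 P3 P4 P5 P6 by blast
qed


end
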